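(* Let $n\ge2$. The number of exceptional sets in the abelian tube $\mathcal W_n$ of rank $n$ is \[\frac{n\,(3n-3)!}{(n-1)!\,(2n-1)!}.\]
   Context: $\mathcal W_n$ is the category of finite-dimensional nilpotent representations of an oriented cycle with $n$ vertices. An exceptional sequence in $\mathcal W_n$ is a sequence $(V_1,\dots,V_k)$ of rigid bricks (indecomposables of length at most $n-1$) with $\mathrm{Hom}(V_j,V_i)=0=\mathrm{Ext}^1(V_j,V_i)$ for $i<j$; it is complete if $k=n-1$. An exceptional set is a set of (isomorphism classes of) objects which can be ordered to form a complete exceptional sequence. *)

theory Defs
  imports Complex_Main
begin

text \<open>
  Concrete model of the abelian tube W_n: nilpotent representations of the
  oriented cycle with vertices 0..n-1 and arrows v -> (v+1) mod n, over a field 'k.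
  Up to isomorphism the indecomposables are the uniserial representations
  U(i,l) (i < n, l >= 1): basis vectors e_0..e_{l-1}, e_k sitting at vertex
  (i+k) mod n, arrows acting by e_k -> e_{k+1} (e_{l-1} -> 0).
  A representation is encoded by the pair (i,l); distinct pairs give
  non-isomorphic representations.  Linear maps are matrices nat => nat => 'k
  (rows indexed by the target basis, columns by the source basis).
\<close>

type_synonym obj = "nat \<times> nat"

definition vtx :: "nat \<Rightarrow> nat \<Rightarrow> nat \<Rightarrow> nat" where
  "vtx n i k = (i + k) mod n"

definition indec :: "nat \<Rightarrow> obj set" where
  "indec n = {(i, l). i < n \<and> 1 \<le> l}"

definition mmul :: "nat \<Rightarrow> (nat \<Rightarrow> nat \<Rightarrow> 'k::field) \<Rightarrow> (nat \<Rightarrow> nat \<Rightarrow> 'k) \<Rightarrow> nat \<Rightarrow> nat \<Rightarrow> 'k" where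
  "mmul p A B = (\<lambda>j k. \<Sum>m<p. A j m * B m k)"

text \<open>matrix of the nilpotent arrow action on U(i,l)\<close>
definition shift :: "'k itself \<Rightarrow> nat \<Rightarrow> nat \<Rightarrow> nat \<Rightarrow> 'k::field" where
  "shift K l = (\<lambda>j k. if j = Suc k \<and> j < l then 1 else 0)"

definition idm :: "'k itself \<Rightarrow> nat \<Rightarrow> nat \<Rightarrow> nat \<Rightarrow> 'k::field" where
  "idm K l = (\<lambda>j k. if j = k \<and> j < l then 1 else 0)"

text \<open>degree-0 maps U -> U' : families of linear maps U_v -> U'_v\<close>
definition graded0 :: "nat \<Rightarrow> obj \<Rightarrow> obj \<Rightarrow> (nat \<Rightarrow> nat \<Rightarrow> 'k::field) \<Rightarrow> bool" where
  "graded0 n U U' f = (\<forall>j k. (k < snd U \<and> j < snd U' \<and> vtx n (fst U') j = vtx n (fst U) k) \<or> f j k = 0)"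

text \<open>degree-1 maps: families of linear maps U_v -> U'_{v+1}, one for each arrow v -> v+1\<close>
definition graded1 :: "nat \<Rightarrow> obj \<Rightarrow> obj \<Rightarrow> (nat \<Rightarrow> nat \<Rightarrow> 'k::field) \<Rightarrow> bool" where
  "graded1 n U U' g = (\<forall>j k. (k < snd U \<and> j < snd U' \<and> vtx n (fst U') j = Suc (vtx n (fst U) k) mod n) \<or> g j k = 0)"

definition is_hom :: "'k itself \<Rightarrow> nat \<Rightarrow> obj \<Rightarrow> obj \<Rightarrow> (nat \<Rightarrow> nat \<Rightarrow> 'k::field) \<Rightarrow> bool" where
  "is_hom K n U U' f \<longleftrightarrow> graded0 n U U' f \<and>
     mmul (snd U') (shift K (snd U')) f = mmul (snd U) f (shift K (snd U))"

definition hom_zero :: "'k::field itself \<Rightarrow> nat \<Rightarrow> obj \<Rightarrow> obj \<Rightarrow> bool" where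
  "hom_zero K n U U' \<longleftrightarrow> (\<forall>f :: nat \<Rightarrow> nat \<Rightarrow> 'k. is_hom K n U U' f \<longrightarrow> f = (\<lambda>_ _. 0))"

text \<open>Ext^1(U,U') = 0: via the standard (Ringel) resolution for quiver representations,
  Ext^1(U,U') is the cokernel of (f_v)_v |-> (U'_a f_{s a} - f_{t a} U_a)_a.\<close>
definition ext_zero :: "'k::field itself \<Rightarrow> nat \<Rightarrow> obj \<Rightarrow> obj \<Rightarrow> bool" where
  "ext_zero K n U U' \<longleftrightarrow> (\<forall>g :: nat \<Rightarrow> nat \<Rightarrow> 'k. graded1 n U U' g \<longrightarrow>
     (\<exists>f. graded0 n U U' f \<and>
        g = (\<lambda>j k. mmul (snd U') (shift K (snd U')) f j k - mmul (snd U) f (shift K (snd U)) j k)))"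

definition brick :: "'k::field itself \<Rightarrow> nat \<Rightarrow> obj \<Rightarrow> bool" where
  "brick K n U \<longleftrightarrow> (\<forall>f :: nat \<Rightarrow> nat \<Rightarrow> 'k. is_hom K n U U f \<longrightarrow> f \<noteq> (\<lambda>_ _. 0) \<longrightarrow>
     (\<exists>g. mmul (snd U) f g = idm K (snd U) \<and> mmul (snd U) g f = idm K (snd U)))"

definition rigid_brick :: "'k::field itself \<Rightarrow> nat \<Rightarrow> obj \<Rightarrow> bool" where
  "rigid_brick K n U \<longleftrightarrow> brick K n U \<and> ext_zero K n U U"

definition exc_seq :: "'k::field itself \<Rightarrow> nat \<Rightarrow> obj list \<Rightarrow> bool" where
  "exc_seq K n xs \<longleftrightarrow>
     (\<forall>V\<in>set xs. V \<in> indec n \<and> rigid_brick K n V) \<and>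
     (\<forall>i j. i < j \<and> j < length xs \<longrightarrow>
        hom_zero K n (xs ! j) (xs ! i) \<and> ext_zero K n (xs ! j) (xs ! i))"

definition exc_set :: "'k::field itself \<Rightarrow> nat \<Rightarrow> obj set \<Rightarrow> bool" where
  "exc_set K n S \<longleftrightarrow> (\<exists>xs. exc_seq K n xs \<and> length xs = n - 1 \<and> set xs = S)"

end

theory Submission
  imports Defs
begin

definition HOMc :: "nat \<Rightarrow> obj \<Rightarrow> obj \<Rightarrow> bool" where
  "HOMc n U V \<longleftrightarrow> (\<exists>m. 1 \<le> m \<and> m \<le> snd U \<and> m \<le> snd V \<and> (fst V + snd V - m) mod n = fst U mod n)"

definition EXTc :: "nat \<Rightarrow> obj \<Rightarrow> obj \<Rightarrow> bool" where
  "EXTc n U V \<longleftrightarrow> (\<exists>m. 1 \<le> m \<and> m \<le> snd U \<and> snd U < snd V + m \<and> (fst U + m) mod n = fst V mod n)"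

lemma mmul_shift_left:
  "mmul l' (shift K l') f j k = (if 1 \<le> j \<and> j < l' then f (j - 1) k else 0)"
proof -
  have "mmul l' (shift K l') f j k = (\<Sum>m<l'. (if m = j - 1 then (if 1 \<le> j \<and> j < l' then f m k else 0) else 0))"
    unfolding mmul_def shift_def by (rule sum.cong) auto
  also have "\<dots> = (if 1 \<le> j \<and> j < l' then f (j - 1) k else 0)"
    by (subst sum.delta) auto
  finally show ?thesis .
qed

lemma mmul_shift_right:
  "mmul l f (shift K l) j k = (if Suc k < l then f j (Suc k) else 0)"
proof -
  have "mmul l f (shift K l) j k = (\<Sum>m<l. (if m = Suc k then (if Suc k < l then f j m else 0) else 0))"
    unfolding mmul_def shift_def by (rule sum.cong) auto
  also have "\<dots> = (if Suc k < l then f j (Suc k) else 0)"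
    by (subst sum.delta) auto
  finally show ?thesis .
qed

lemma is_hom_eq:
  "is_hom K n U V f \<longleftrightarrow> graded0 n U V f \<and>
     (\<forall>j k. (if 1 \<le> j \<and> j < snd V then f (j - 1) k else 0) = (if Suc k < snd U then f j (Suc k) else 0))"
  unfolding is_hom_def mmul_shift_left mmul_shift_right by (auto simp: fun_eq_iff)

lemma hom_step:
  assumes "is_hom K n U V f"
  shows "f (Suc j) (Suc k) = (if Suc j < snd V \<and> Suc k < snd U then f j k else 0)"
proof -
  from assms have g: "graded0 n U V f" and E: "\<And>j k. (if 1 \<le> j \<and> j < snd V then f (j - 1) k else 0) = (if Suc k < snd U then f j (Suc k) else 0)"
    by (auto simp: is_hom_eq)
  have E1: "(if 1 \<le> Suc j \<and> Suc j < snd V then f (Suc j - 1) k else 0) = (if Suc k < snd U then f (Suc j) (Suc k) else 0)"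
    by (rule E)
  show ?thesis
  proof (cases "Suc j < snd V \<and> Suc k < snd U")
    case True
    then have "f (Suc j - 1) k = f (Suc j) (Suc k)" using E1 by (simp only: if_True le_add1 plus_1_eq_Suc[symmetric] simp_thms)
    then show ?thesis using True by simp
  next
    case False
    then have 1: "f (Suc j) (Suc k) = 0" using g unfolding graded0_def by fastforce
    have "(if Suc j < snd V \<and> Suc k < snd U then f j k else 0) = 0" by (rule if_not_P[OF False])
    then show ?thesis using 1 by simp
  qed
qed

lemma hom_zero_row:
  assumes "is_hom K n U V f"
  shows "f 0 (Suc k) = 0"
proof -
  from assms have g: "graded0 n U V f" and E: "\<And>j k. (if 1 \<le> j \<and> j < snd V then f (j - 1) k else 0) = (if Suc k < snd U then f j (Suc k) else 0)"
    by (auto simp: is_hom_eq)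
  have "(if Suc k < snd U then f 0 (Suc k) else 0) = 0" using E[of 0 k] by simp
  moreover have "\<not> Suc k < snd U \<Longrightarrow> f 0 (Suc k) = 0" using g unfolding graded0_def by fastforce
  ultimately show ?thesis by (auto split: if_splits)
qed

lemma hom_upper:
  assumes "is_hom K n U V f"
  shows "j < k \<Longrightarrow> f j k = 0"
proof (induction j arbitrary: k)
  case 0 then obtain k' where "k = Suc k'" by (cases k) auto
  then show ?case using hom_zero_row[OF assms] by simp
next
  case (Suc j)
  then obtain k' where k: "k = Suc k'" by (cases k) auto
  then show ?case using Suc hom_step[OF assms, of j k'] by auto
qed

lemma hom_diag:
  assumes "is_hom K n U V f"
  shows "j + t < snd V \<Longrightarrow> t < snd U \<Longrightarrow> f (j + t) t = f j 0"
proof (induction t)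
  case 0 then show ?case by simp
next
  case (Suc t)
  then show ?case using hom_step[OF assms, of "j + t" t] by simp
qed

lemma hom_last_col:
  assumes "is_hom K n U V f" and "Suc j < snd V" and "1 \<le> snd U"
  shows "f j (snd U - 1) = 0"
proof -
  from assms have E: "\<And>j k. (if 1 \<le> j \<and> j < snd V then f (j - 1) k else 0) = (if Suc k < snd U then f j (Suc k) else 0)"
    by (auto simp: is_hom_eq)
  show ?thesis using E[of "Suc j" "snd U - 1"] assms(2,3) by simp
qed

lemma hom_zero_if_not_HOMc:
  assumes "is_hom K n U V f" and "\<not> HOMc n U V"
  shows "f = (\<lambda>_ _. 0)"
proof -
  obtain i l where U: "U = (i, l)" by (cases U)
  obtain i' l' where V: "V = (i', l')" by (cases V)
  have g: "graded0 n U V f" using assms(1) by (simp add: is_hom_eq)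
  have col0: "f j 0 = 0" for j
  proof (cases "0 < l \<and> j < l' \<and> (i' + j) mod n = i mod n")
    case False
    have "0 < l \<and> j < l' \<and> (i' + j) mod n = (i + 0) mod n \<or> f j 0 = 0"
      using g unfolding graded0_def U V vtx_def by (metis fst_conv snd_conv)
    then show ?thesis using False by auto
  next
    case True
    show ?thesis
    proof (cases "j + l < l'")
      case True2: True
      have "f (j + (l - 1)) (l - 1) = f j 0" using hom_diag[OF assms(1), of j "l - 1"] True2 True U V by simp
      moreover have "f (j + (l - 1)) (snd U - 1) = 0"
        using hom_last_col[OF assms(1), of "j + (l - 1)"] True2 True U V by simp
      ultimately show ?thesis using U by simp
    next
      case False
      have "HOMc n U V" unfolding HOMc_def U V
        apply (rule exI[of _ "l' - j"]) using True False by auto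
      then show ?thesis using assms(2) by simp
    qed
  qed
  have "f j k = 0" for j k
  proof (cases "k \<le> j")
    case True
    then obtain d where d: "j = d + k" using le_Suc_ex by (metis add.commute le_add_diff_inverse)
    show ?thesis
    proof (cases "j < l' \<and> k < l")
      case True
      then show ?thesis using hom_diag[OF assms(1), of d k] d col0 U V by simp
    next
      case False then show ?thesis using g unfolding graded0_def U V by auto
    qed
  next
    case False then show ?thesis using hom_upper[OF assms(1)] by simp
  qed
  then show ?thesis by (auto simp: fun_eq_iff)
qed

lemma HOMc_hom:
  assumes "HOMc n U V"
  shows "\<exists>f. is_hom K n U V f \<and> f \<noteq> (\<lambda>_ _. 0::'k::field)"
proof -
  obtain i l where U: "U = (i, l)" by (cases U)
  obtain i' l' where V: "V = (i', l')" by (cases V)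
  obtain m where m: "1 \<le> m" "m \<le> l" "m \<le> l'" "(i' + l' - m) mod n = i mod n"
    using assms unfolding HOMc_def U V by auto
  define f :: "nat \<Rightarrow> nat \<Rightarrow> 'k" where "f j k = (if k < m \<and> j = k + (l' - m) then 1 else 0)" for j k
  have gr: "graded0 n U V f"
    unfolding graded0_def U V vtx_def f_def
  proof (intro allI)
    fix j k
    show "k < snd (i, l) \<and> j < snd (i', l') \<and> (fst (i', l') + j) mod n = (fst (i, l) + k) mod n \<or>
          (if k < m \<and> j = k + (l' - m) then 1 else (0::'k)) = 0"
    proof (cases "k < m \<and> j = k + (l' - m)")
      case True
      have "(i' + j) mod n = ((i' + l' - m) + k) mod n" using True m by (simp add: algebra_simps)
      also have "\<dots> = ((i' + l' - m) mod n + k) mod n" by (simp add: mod_add_left_eq)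
      also have "\<dots> = (i + k) mod n" using m(4) by (simp add: mod_add_left_eq)
      finally show ?thesis using True m by auto
    next
      case False then show ?thesis by auto
    qed
  qed
  have "is_hom K n U V f"
    unfolding is_hom_eq using gr apply simp
    unfolding f_def U V using m by auto
  moreover have "f (l' - m) 0 = 1" unfolding f_def using m by simp
  then have "f \<noteq> (\<lambda>_ _. 0)" by (metis one_neq_zero)
  ultimately show ?thesis by blast
qed

theorem hom_zero_iff: "hom_zero K n U V \<longleftrightarrow> \<not> HOMc n U V"
  unfolding hom_zero_def using hom_zero_if_not_HOMc HOMc_hom by metis

lemma mod_cancel: "((x::nat) + c) mod n = (y + c) mod n \<Longrightarrow> x mod n = y mod n"
  by (simp add: nat_mod_eq_iff)

lemma ext_zero_eq:
  "ext_zero K n U V \<longleftrightarrow> (\<forall>g :: nat \<Rightarrow> nat \<Rightarrow> 'k. graded1 n U V g \<longrightarrow>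
     (\<exists>f. graded0 n U V f \<and>
        (\<forall>j k. g j k = (if 1 \<le> j \<and> j < snd V then f (j - 1) k else 0) - (if Suc k < snd U then f j (Suc k) else 0))))"
  for K :: "'k::field itself"
  unfolding ext_zero_def mmul_shift_left mmul_shift_right by (simp add: fun_eq_iff)

lemma ext_zero_if_not_EXTc:
  fixes K :: "'k::field itself"
  assumes nE: "\<not> EXTc n U V"
  shows "ext_zero K n U V"
  unfolding ext_zero_eq
proof (intro allI impI)
  obtain i l where U: "U = (i, l)" by (cases U)
  obtain i' l' where V: "V = (i', l')" by (cases V)
  fix g :: "nat \<Rightarrow> nat \<Rightarrow> 'k"
  assume g1: "graded1 n U V g"
  have gz: "g j k = 0" if "\<not> (k < l \<and> j < l' \<and> (i' + j) mod n = (i + Suc k) mod n)" for j k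
    using g1 that unfolding graded1_def U V vtx_def by (auto simp: mod_Suc_eq)
  define Fw where "Fw j k = (\<Sum>t<l. g (j + 1 + t) (k + t))" for j k
  define Bk where "Bk j k = - (\<Sum>t<k. if k \<le> j + 1 + t then g (j + 1 + t - k) t else 0)" for j k
  define f where "f j k = (if k < l \<and> j < l' \<and> (i' + j) mod n = (i + k) mod n then (if k \<le> j then Fw j k else Bk j k) else 0)" for j k
  have gr: "graded0 n U V f" unfolding graded0_def U V vtx_def f_def by auto
  have main: "g j k = (if 1 \<le> j \<and> j < l' then f (j - 1) k else 0) - (if Suc k < l then f j (Suc k) else 0)" for j k
  proof (cases "k < l \<and> j < l' \<and> (i' + j) mod n = (i + Suc k) mod n")
    case False
    have a: "(if 1 \<le> j \<and> j < l' then f (j - 1) k else 0) = 0"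
    proof (cases "1 \<le> j \<and> j < l' \<and> k < l \<and> (i' + (j - 1)) mod n = (i + k) mod n")
      case True
      then have "(i' + (j - 1) + 1) mod n = (i + k + 1) mod n" by (metis mod_Suc_eq Suc_eq_plus1)
      then have "(i' + j) mod n = (i + Suc k) mod n" using True by simp
      then show ?thesis using False True by auto
    next
      case False then show ?thesis unfolding f_def by auto
    qed
    have b: "(if Suc k < l then f j (Suc k) else 0) = 0"
      using False unfolding f_def by auto
    show ?thesis using a b gz[OF False] by simp
  next
    case True
    then have kl: "k < l" and jl: "j < l'" and md: "(i' + j) mod n = (i + Suc k) mod n" by auto
    show ?thesis
    proof (cases "k < j")
      case True
      then have j1: "1 \<le> j" by simp
      have md1: "(i' + (j - 1)) mod n = (i + k) mod n"
        using md j1 mod_cancel[of "i' + (j - 1)" 1 n "i + k"] by simp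
      have kj1: "k \<le> j - 1" using True by simp
      have fa: "f (j - 1) k = (\<Sum>t<l. g (j + t) (k + t))"
      proof -
        have jl1: "j - 1 < l'" using jl by simp
        have "f (j - 1) k = Fw (j - 1) k" unfolding f_def using kl jl1 md1 kj1 by (simp only: if_True simp_thms)
        then show ?thesis unfolding Fw_def using j1 by simp
      qed
      have s1: "(\<Sum>t<l. g (j + t) (k + t)) = g j k + (\<Sum>t<l - 1. g (j + 1 + t) (Suc k + t))"
      proof -
        have "l = Suc (l - 1)" using kl by simp
        then have "(\<Sum>t<l. g (j + t) (k + t)) = (\<Sum>t<Suc (l - 1). g (j + t) (k + t))" by simp
        also have "\<dots> = g j k + (\<Sum>t<l - 1. g (j + Suc t) (k + Suc t))" by (subst sum.lessThan_Suc_shift) simp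
        finally show ?thesis by simp
      qed
      show ?thesis
      proof (cases "Suc k < l")
        case True2: True
        have md2: "(i' + j) mod n = (i + Suc k) mod n" using md by simp
        have fb: "f j (Suc k) = (\<Sum>t<l. g (j + 1 + t) (Suc k + t))"
          unfolding f_def Fw_def using True2 jl md2 True by simp
        have s2: "(\<Sum>t<l. g (j + 1 + t) (Suc k + t)) = (\<Sum>t<l - 1. g (j + 1 + t) (Suc k + t))"
        proof -
          have "l = Suc (l - 1)" using kl by simp
          then have "(\<Sum>t<l. g (j + 1 + t) (Suc k + t)) = (\<Sum>t<Suc (l - 1). g (j + 1 + t) (Suc k + t))" by simp
          also have "\<dots> = (\<Sum>t<l - 1. g (j + 1 + t) (Suc k + t)) + g (j + 1 + (l - 1)) (Suc k + (l - 1))"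
            by (rule sum.lessThan_Suc)
          also have "g (j + 1 + (l - 1)) (Suc k + (l - 1)) = 0" using kl by (intro gz) auto
          finally show ?thesis by simp
        qed
        show ?thesis using fa fb s1 s2 j1 jl True2 by simp
      next
        case False2: False
        have "(\<Sum>t<l - 1. g (j + 1 + t) (Suc k + t)) = 0"
          by (rule sum.neutral) (use False2 in \<open>auto intro!: gz\<close>)
        then show ?thesis using fa s1 j1 jl False2 by simp
      qed
    next
      case False
      then have jk: "j \<le> k" by simp
      have kl2: "Suc k < l"
      proof (rule ccontr)
        assume "\<not> Suc k < l"
        have "EXTc n U V" unfolding EXTc_def U V
        proof (rule exI[of _ "Suc k - j"], intro conjI)
          show "(fst (i, l) + (Suc k - j)) mod n = fst (i', l') mod n"
          proof -
            have "i + (Suc k - j) + j = i + Suc k" using jk by simp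
            then have "(i + (Suc k - j) + j) mod n = (i' + j) mod n" using md by simp
            then have "(i + (Suc k - j)) mod n = i' mod n" by (rule mod_cancel)
            then show ?thesis by simp
          qed
        qed (use jk kl jl \<open>\<not> Suc k < l\<close> in auto)
        then show False using nE by simp
      qed
      have md2: "(i' + j) mod n = (i + Suc k) mod n" using md by simp
      have fb: "f j (Suc k) = - ((\<Sum>t<k. if k \<le> j + t then g (j + t - k) t else 0) + g j k)"
      proof -
        have hh: "\<And>t. j + 1 + t - Suc k = j + t - k" by simp
        show ?thesis unfolding f_def Bk_def using kl2 jl md2 jk
          apply (simp add: sum.lessThan_Suc)
          apply (rule sum.cong)
           apply auto
          done
      qed
      show ?thesis
      proof (cases "j = 0")
        case True
        have "(\<Sum>t<k. if k \<le> j + t then g (j + t - k) t else 0) = 0" using True by (intro sum.neutral) auto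
        then show ?thesis using fb kl2 True by simp
      next
        case False
        have md1: "(i' + (j - 1)) mod n = (i + k) mod n"
          using md False mod_cancel[of "i' + (j - 1)" 1 n "i + k"] by simp
        have fa: "f (j - 1) k = - (\<Sum>t<k. if k \<le> j + t then g (j + t - k) t else 0)"
        proof -
          have jl1: "j - 1 < l'" using jl by simp
          have nk: "\<not> k \<le> j - 1" using jk False by simp
          have fb: "f (j - 1) k = Bk (j - 1) k" unfolding f_def using kl jl1 md1 nk by (simp only: if_True if_False simp_thms)
          have e: "j - 1 + 1 = j" using False by simp
          show ?thesis using fb unfolding Bk_def e by simp
        qed
        show ?thesis using fa fb kl2 jl False by simp
      qed
    qed
  qed
  show "\<exists>f. graded0 n U V f \<and> (\<forall>j k. g j k = (if 1 \<le> j \<and> j < snd V then f (j - 1) k else 0) - (if Suc k < snd U then f j (Suc k) else 0))"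
    using gr main U V by auto
qed

lemma not_ext_zero_if_EXTc:
  fixes K :: "'k::field itself"
  assumes E: "EXTc n U V" and l'1: "1 \<le> snd V"
  shows "\<not> ext_zero K n U V"
proof
  obtain i l where U: "U = (i, l)" by (cases U)
  obtain i' l' where V: "V = (i', l')" by (cases V)
  obtain m where m: "1 \<le> m" "m \<le> l" "l < l' + m" "(i + m) mod n = i' mod n"
    using E unfolding EXTc_def U V by auto
  define g :: "nat \<Rightarrow> nat \<Rightarrow> 'k" where "g j k = (if j = 0 \<and> k = m - 1 then 1 else 0)" for j k
  have g1: "graded1 n U V g"
    unfolding graded1_def U V vtx_def g_def
  proof (intro allI)
    fix j k
    have "(i' + 0) mod n = Suc ((i + (m - 1)) mod n) mod n" using m(1,4) by (simp add: mod_Suc_eq)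
    then show "k < snd (i, l) \<and> j < snd (i', l') \<and> (fst (i', l') + j) mod n = Suc ((fst (i, l) + k) mod n) mod n \<or>
         (if j = 0 \<and> k = m - 1 then 1 else (0::'k)) = 0"
      using m l'1 V by auto
  qed
  assume "ext_zero K n U V"
  then obtain f where gr: "graded0 n U V f" and eq: "\<And>j k. g j k = (if 1 \<le> j \<and> j < l' then f (j - 1) k else 0) - (if Suc k < l then f j (Suc k) else 0)"
    using g1 unfolding ext_zero_eq U V by auto
  have z: "f (k - m) k = 0" if "m \<le> k" for k
    using that
  proof (induction "l - k" arbitrary: k rule: less_induct)
    case less
    show ?case
    proof (cases "k < l")
      case False then show ?thesis using gr unfolding graded0_def U V by auto
    next
      case True
      have "g (Suc k - m) k = 0" unfolding g_def using less.prems m(1) by auto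
      moreover have "Suc k - m < l'" using True m(3) less.prems by linarith
      moreover have "1 \<le> Suc k - m" using less.prems by simp
      ultimately have "f (k - m) k = (if Suc k < l then f (Suc k - m) (Suc k) else 0)"
        using eq[of "Suc k - m" k] less.prems by (simp add: Suc_diff_le)
      moreover have "Suc k < l \<Longrightarrow> f (Suc k - m) (Suc k) = 0"
        using less.hyps[of "Suc k"] less.prems by simp
      ultimately show ?thesis by simp
    qed
  qed
  have "g 0 (m - 1) = 1" unfolding g_def by simp
  moreover have "g 0 (m - 1) = - (if m < l then f 0 m else 0)" using eq[of 0 "m - 1"] m(1) by simp
  moreover have "f 0 m = 0" using z[of m] by simp
  ultimately show False by (simp split: if_splits)
qed

theorem ext_zero_iff: "1 \<le> snd V \<Longrightarrow> ext_zero K n U V \<longleftrightarrow> \<not> EXTc n U V"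
  using ext_zero_if_not_EXTc not_ext_zero_if_EXTc by metis

definition arcs :: "nat \<Rightarrow> obj set" where
  "arcs n = {(i, l). i < n \<and> 1 \<le> l \<and> l < n}"

lemma hom_scalar:
  assumes h: "is_hom K n U U f" and ln: "snd U < n"
  shows "f j k = (if j = k \<and> j < snd U then f 0 0 else 0)"
proof -
  obtain i l where U: "U = (i, l)" by (cases U)
  have g: "graded0 n U U f" using h by (simp add: is_hom_eq)
  show ?thesis
  proof (cases "k \<le> j")
    case False then show ?thesis using hom_upper[OF h] by simp
  next
    case True
    then obtain d where d: "j = d + k" by (metis add.commute le_add_diff_inverse)
    show ?thesis
    proof (cases "j < l \<and> k < l")
      case False
      then have "f j k = 0" using g unfolding graded0_def U by auto
      then show ?thesis using False U by auto
    next
      case True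
      have fd: "f j k = f d 0" using hom_diag[OF h, of d k] d True U by simp
      show ?thesis
      proof (cases "d = 0")
        case True then show ?thesis using fd d U \<open>j < l \<and> k < l\<close> by simp
      next
        case False
        have "f d 0 = 0"
        proof (rule ccontr)
          assume "f d 0 \<noteq> 0"
          moreover have "0 < l \<and> d < l \<and> (i + d) mod n = (i + 0) mod n \<or> f d 0 = 0"
            using g unfolding graded0_def U vtx_def by (metis fst_conv snd_conv)
          ultimately have "(i + d) mod n = (i + 0) mod n" by blast
          then have "d mod n = 0 mod n" using mod_cancel[of d i n 0] by (simp add: add.commute)
          then have "n dvd d" by (simp add: mod_eq_0_iff_dvd)
          moreover have "d < n" using True d ln U by simp
          ultimately show False using False by (simp add: nat_dvd_not_less)
        qed
        then show ?thesis using fd False d by simp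
      qed
    qed
  qed
qed

lemma brick_if_short:
  fixes K :: "'k::field itself"
  assumes ln: "snd U < n"
  shows "brick K n U"
  unfolding brick_def
proof (intro allI impI)
  fix f :: "nat \<Rightarrow> nat \<Rightarrow> 'k"
  assume h: "is_hom K n U U f" and nz: "f \<noteq> (\<lambda>_ _. 0)"
  define c where "c = f 0 0"
  have fe: "f j k = (if j = k \<and> j < snd U then c else 0)" for j k
    unfolding c_def by (rule hom_scalar[OF h ln])
  have c0: "c \<noteq> 0" using nz fe by (auto simp: fun_eq_iff)
  define g :: "nat \<Rightarrow> nat \<Rightarrow> 'k" where "g j k = (if j = k \<and> j < snd U then inverse c else 0)" for j k
  have p1: "mmul (snd U) f g = idm K (snd U)"
  proof (intro ext)
    fix j k
    have "mmul (snd U) f g j k = (\<Sum>m<snd U. if m = j then (if j = k \<and> j < snd U then c * inverse c else 0) else 0)"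
      unfolding mmul_def fe g_def by (rule sum.cong) auto
    also have "\<dots> = idm K (snd U) j k" unfolding idm_def using c0 by (simp add: sum.delta)
    finally show "mmul (snd U) f g j k = idm K (snd U) j k" .
  qed
  have p2: "mmul (snd U) g f = idm K (snd U)"
  proof (intro ext)
    fix j k
    have "mmul (snd U) g f j k = (\<Sum>m<snd U. if m = j then (if j = k \<and> j < snd U then inverse c * c else 0) else 0)"
      unfolding mmul_def fe g_def by (rule sum.cong) auto
    also have "\<dots> = idm K (snd U) j k" unfolding idm_def using c0 by (simp add: sum.delta)
    finally show "mmul (snd U) g f j k = idm K (snd U) j k" .
  qed
  show "\<exists>g. mmul (snd U) f g = idm K (snd U) \<and> mmul (snd U) g f = idm K (snd U)"
    using p1 p2 by blast
qed

lemma rigid_brick_iff: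
  fixes K :: "'k::field itself"
  assumes "U \<in> indec n"
  shows "rigid_brick K n U \<longleftrightarrow> snd U < n"
proof
  obtain i l where U: "U = (i, l)" by (cases U)
  have l1: "1 \<le> l" using assms U unfolding indec_def by auto
  have n0: "0 < n" using assms U unfolding indec_def by auto
  {
    assume r: "rigid_brick K n U"
    show "snd U < n"
    proof (rule ccontr)
      assume "\<not> snd U < n"
      then have "EXTc n U U" unfolding EXTc_def U using l1 n0 by (intro exI[of _ n]) auto
      then have "\<not> ext_zero K n U U" using not_ext_zero_if_EXTc[of n U U K] l1 U by simp
      then show False using r unfolding rigid_brick_def by simp
    qed
  }
  {
    assume ln: "snd U < n"
    have "\<not> EXTc n U U"
    proof
      assume "EXTc n U U"
      then obtain m where m: "1 \<le> m" "m \<le> l" "(i + m) mod n = i mod n" unfolding EXTc_def U by auto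
      then have "m mod n = 0 mod n" using mod_cancel[of m i n 0] by (simp add: add.commute)
      then have "n dvd m" by (simp add: mod_eq_0_iff_dvd)
      then show False using m ln U by (simp add: nat_dvd_not_less)
    qed
    then show "rigid_brick K n U" unfolding rigid_brick_def
      using brick_if_short[OF ln] ext_zero_if_not_EXTc by blast
  }
qed

lemma exc_seq_iff:
  fixes K :: "'k::field itself"
  shows "exc_seq K n xs \<longleftrightarrow> set xs \<subseteq> arcs n \<and>
     (\<forall>i j. i < j \<and> j < length xs \<longrightarrow> \<not> HOMc n (xs ! j) (xs ! i) \<and> \<not> EXTc n (xs ! j) (xs ! i))"
proof -
  have a: "(V \<in> indec n \<and> rigid_brick K n V) \<longleftrightarrow> V \<in> arcs n" for V
  proof
    assume "V \<in> indec n \<and> rigid_brick K n V"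
    then show "V \<in> arcs n" using rigid_brick_iff[of V n K] unfolding indec_def arcs_def by auto
  next
    assume "V \<in> arcs n"
    then have "V \<in> indec n" "snd V < n" unfolding indec_def arcs_def by auto
    then show "V \<in> indec n \<and> rigid_brick K n V" using rigid_brick_iff[of V n K] by simp
  qed
  have b: "set xs \<subseteq> arcs n \<Longrightarrow> i < length xs \<Longrightarrow> ext_zero K n (xs ! j) (xs ! i) \<longleftrightarrow> \<not> EXTc n (xs ! j) (xs ! i)" for i j
  proof -
    assume "set xs \<subseteq> arcs n" "i < length xs"
    then have "xs ! i \<in> arcs n" using nth_mem by blast
    then have "1 \<le> snd (xs ! i)" unfolding arcs_def by auto
    then show ?thesis using ext_zero_iff[of "xs ! i" K n "xs ! j"] by simp
  qed
  show ?thesis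
  proof
    assume e: "exc_seq K n xs"
    then have s: "set xs \<subseteq> arcs n" unfolding exc_seq_def using a by blast
    show "set xs \<subseteq> arcs n \<and> (\<forall>i j. i < j \<and> j < length xs \<longrightarrow> \<not> HOMc n (xs ! j) (xs ! i) \<and> \<not> EXTc n (xs ! j) (xs ! i))"
    proof (rule conjI[OF s], intro allI impI)
      fix i j assume ij: "i < j \<and> j < length xs"
      then have "hom_zero K n (xs ! j) (xs ! i) \<and> ext_zero K n (xs ! j) (xs ! i)" using e unfolding exc_seq_def by blast
      then show "\<not> HOMc n (xs ! j) (xs ! i) \<and> \<not> EXTc n (xs ! j) (xs ! i)"
        using b[OF s, of i j] ij hom_zero_iff[of K n "xs ! j" "xs ! i"] by simp
    qed
  next
    assume r: "set xs \<subseteq> arcs n \<and> (\<forall>i j. i < j \<and> j < length xs \<longrightarrow> \<not> HOMc n (xs ! j) (xs ! i) \<and> \<not> EXTc n (xs ! j) (xs ! i))"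
    then have s: "set xs \<subseteq> arcs n" by simp
    show "exc_seq K n xs" unfolding exc_seq_def
    proof (rule conjI; intro ballI allI impI)
      fix V assume "V \<in> set xs" then show "V \<in> indec n \<and> rigid_brick K n V" using a s by blast
    next
      fix i j assume ij: "i < j \<and> j < length xs"
      then show "hom_zero K n (xs ! j) (xs ! i) \<and> ext_zero K n (xs ! j) (xs ! i)"
        using b[OF s, of i j] r hom_zero_iff[of K n "xs ! j" "xs ! i"] by simp
    qed
  qed
qed

type_synonym iv = "nat \<times> nat"

definition lhom :: "iv \<Rightarrow> iv \<Rightarrow> bool" where
  "lhom X Y \<longleftrightarrow> fst Y \<le> fst X \<and> fst X < snd Y \<and> snd Y \<le> snd X"

definition lext :: "iv \<Rightarrow> iv \<Rightarrow> bool" where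
  "lext X Y \<longleftrightarrow> fst X < fst Y \<and> fst Y \<le> snd X \<and> snd X < snd Y"

definition lord :: "iv set \<Rightarrow> (iv \<Rightarrow> nat) \<Rightarrow> bool" where
  "lord T f \<longleftrightarrow> (\<forall>X\<in>T. \<forall>Y\<in>T. X \<noteq> Y \<longrightarrow> (lhom X Y \<or> lext X Y) \<longrightarrow> f X < f Y)"

definition ivals :: "nat \<Rightarrow> nat \<Rightarrow> iv set" where
  "ivals p q = {(a, b). p \<le> a \<and> a < b \<and> b \<le> q}"

definition Cs :: "nat \<Rightarrow> nat \<Rightarrow> iv set set" where
  "Cs p q = {T. T \<subseteq> ivals p q \<and> card T = q - p \<and> (\<exists>f. lord T f)}"

definition C1s :: "nat \<Rightarrow> nat \<Rightarrow> iv set set" where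
  "C1s p q = {T \<in> Cs p q. (p, q) \<in> T}"

lemma finite_ivals[simp]: "finite (ivals p q)"
proof -
  have "ivals p q \<subseteq> {p..q} \<times> {p..q}" unfolding ivals_def by auto
  then show ?thesis by (rule finite_subset) simp
qed

lemma lord_mono: "lord T f \<Longrightarrow> S \<subseteq> T \<Longrightarrow> lord S f"
  unfolding lord_def by blast

lemma lordD: "lord T f \<Longrightarrow> X \<in> T \<Longrightarrow> Y \<in> T \<Longrightarrow> X \<noteq> Y \<Longrightarrow> lhom X Y \<or> lext X Y \<Longrightarrow> f X < f Y"
  unfolding lord_def by blast

lemma noncross:
  assumes "lord T f" "(a, b) \<in> T" "(c, d) \<in> T" "a < c" "c < b" "b < d"
  shows False
proof -
  have "f (c, d) < f (a, b)" using lordD[OF assms(1,3,2)] assms(4-6) unfolding lhom_def by auto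
  moreover have "f (a, b) < f (c, d)" using lordD[OF assms(1,2,3)] assms(4-6) unfolding lext_def by auto
  ultimately show False by simp
qed

lemma chain:
  assumes fin: "finite A" and lo: "lord A f" and wf: "\<forall>(a, b)\<in>A. a < b"
    and pq: "p < q"
    and cov: "\<forall>v. p \<le> v \<and> v < q \<longrightarrow> (\<exists>(a, b)\<in>A. a \<le> v \<and> v < b)"
    and njp: "\<forall>(a, b)\<in>A. \<not> (a < p \<and> p < b)"
    and njq: "\<forall>(a, b)\<in>A. \<not> (a < q \<and> q < b)"
  shows "\<exists>d c. (p, d) \<in> A \<and> (c, q) \<in> A \<and> f (p, d) \<le> f (c, q)"
  using pq cov njp
proof (induction "q - p" arbitrary: p rule: less_induct)
  case less
  from less.prems(2) obtain a b where ab: "(a, b) \<in> A" "a \<le> p" "p < b" using less.prems(1) by blast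
  have "a = p" using ab less.prems(3) by fastforce
  define D where "D = {d. (p, d) \<in> A}"
  have Dfin: "finite D"
  proof -
    have "D \<subseteq> snd ` A" unfolding D_def by force
    then show ?thesis using fin finite_subset by blast
  qed
  have bD: "b \<in> D" using ab \<open>a = p\<close> unfolding D_def by simp
  define d where "d = Max D"
  have dD: "(p, d) \<in> A" using Max_in[OF Dfin] bD unfolding d_def D_def by auto
  have dmax: "\<And>e. (p, e) \<in> A \<Longrightarrow> e \<le> d" using Max_ge[OF Dfin] unfolding d_def D_def by auto
  have pd: "p < d" using dD wf by auto
  have dq: "d \<le> q"
  proof (rule ccontr)
    assume "\<not> d \<le> q"
    then show False using njq dD less.prems(1) by auto
  qed
  show ?case
  proof (cases "d = q")
    case True then show ?thesis using dD by blast
  next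
    case False
    then have dq': "d < q" using dq by simp
    have nj: "\<forall>(a, b)\<in>A. \<not> (a < d \<and> d < b)"
    proof (intro ballI, clarify)
      fix a b assume ab: "(a, b) \<in> A" "a < d" "d < b"
      consider "a < p" | "a = p" | "p < a" by linarith
      then show False
      proof cases
        case 1 then show False using less.prems(3) ab pd by fastforce
      next
        case 2 then show False using dmax[of b] ab by simp
      next
        case 3 then show False using noncross[OF lo dD ab(1)] ab by simp
      qed
    qed
    have cov': "\<forall>v. d \<le> v \<and> v < q \<longrightarrow> (\<exists>(a, b)\<in>A. a \<le> v \<and> v < b)"
      using less.prems(2) pd by auto
    have "\<exists>d' c. (d, d') \<in> A \<and> (c, q) \<in> A \<and> f (d, d') \<le> f (c, q)"
      by (rule less.hyps[of d]) (use dq' pd cov' nj in auto)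
    then obtain d' c where dc: "(d, d') \<in> A" "(c, q) \<in> A" "f (d, d') \<le> f (c, q)" by blast
    have "d < d'" using dc(1) wf by auto
    then have "lext (p, d) (d, d')" unfolding lext_def using pd by simp
    then have "f (p, d) < f (d, d')" using lordD[OF lo dD dc(1)] pd by auto
    then show ?thesis using dD dc by (intro exI[of _ d] exI[of _ c]) auto
  qed
qed

lemma no_chain_under:
  assumes lo: "lord T f" and sub: "T \<subseteq> ivals p q" and pqT: "(p, q) \<in> T"
    and cov: "\<forall>v. p \<le> v \<and> v < q \<longrightarrow> (\<exists>(a, b)\<in>T - {(p, q)}. a \<le> v \<and> v < b)"
  shows False
proof -
  define A where "A = T - {(p, q)}"
  have fin: "finite A" using sub finite_subset unfolding A_def by fastforce
  have lA: "lord A f" using lord_mono[OF lo] unfolding A_def by blast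
  have AI: "A \<subseteq> ivals p q" using sub unfolding A_def by blast
  have wf: "\<forall>(a, b)\<in>A. a < b" using AI unfolding ivals_def by auto
  have pq: "p < q" using sub pqT unfolding ivals_def by auto
  obtain d c where dc: "(p, d) \<in> A" "(c, q) \<in> A" "f (p, d) \<le> f (c, q)"
    using chain[OF fin lA wf pq] cov AI unfolding A_def ivals_def by fastforce
  have dT: "(p, d) \<in> T" "(p, d) \<noteq> (p, q)" "(c, q) \<in> T" "(c, q) \<noteq> (p, q)" using dc unfolding A_def by auto
  have "(p, d) \<in> ivals p q" "(c, q) \<in> ivals p q" using dc AI by auto
  then have h1: "lhom (p, q) (p, d)" and h2: "lhom (c, q) (p, q)" unfolding lhom_def ivals_def by auto
  have "f (p, q) < f (p, d)" using lordD[OF lo pqT dT(1)] dT(2) h1 by auto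
  moreover have "f (c, q) < f (p, q)" using lordD[OF lo dT(3) pqT dT(4) ] h2 by auto
  ultimately show False using dc(3) by simp
qed

lemma split_vertex:
  assumes "T \<subseteq> ivals p q" "\<forall>(a, b)\<in>T. \<not> (a \<le> w \<and> w < b)"
  shows "T = (T \<inter> ivals p w) \<union> (T \<inter> ivals (Suc w) q)"
proof (intro equalityI subsetI)
  fix X assume X: "X \<in> T"
  obtain a b where ab: "X = (a, b)" by fastforce
  have 1: "p \<le> a \<and> a < b \<and> b \<le> q" using assms(1) X ab unfolding ivals_def by blast
  have 2: "\<not> (a \<le> w \<and> w < b)" using assms(2) X ab by blast
  show "X \<in> (T \<inter> ivals p w) \<union> (T \<inter> ivals (Suc w) q)"
  proof (cases "b \<le> w")
    case True then show ?thesis using X ab 1 unfolding ivals_def by simp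
  next
    case False then show ?thesis using X ab 1 2 unfolding ivals_def by simp
  qed
qed blast

lemma split_point:
  assumes "T \<subseteq> ivals p q" "\<forall>(a, b)\<in>T. \<not> (a < k \<and> k < b)"
  shows "T = (T \<inter> ivals p k) \<union> (T \<inter> ivals k q)"
proof (intro equalityI subsetI)
  fix X assume X: "X \<in> T"
  obtain a b where ab: "X = (a, b)" by fastforce
  have 1: "p \<le> a \<and> a < b \<and> b \<le> q" using assms(1) X ab unfolding ivals_def by blast
  have 2: "\<not> (a < k \<and> k < b)" using assms(2) X ab by blast
  show "X \<in> (T \<inter> ivals p k) \<union> (T \<inter> ivals k q)"
  proof (cases "b \<le> k")
    case True then show ?thesis using X ab 1 unfolding ivals_def by simp
  next
    case False then show ?thesis using X ab 1 2 unfolding ivals_def by simp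
  qed
qed blast

lemma card_split_le:
  assumes "T = A \<union> B" "finite T"
  shows "card T \<le> card A + card B"
  using assms by (simp add: card_Un_le)

lemma bound:
  assumes "lord T f" "T \<subseteq> ivals p q"
  shows "card T \<le> q - p"
  using assms
proof (induction "q - p" arbitrary: p q T rule: less_induct)
  case less
  note lo = less.prems(1) and sub = less.prems(2)
  have finT: "finite T" using finite_subset[OF sub] by simp
  show ?case
  proof (cases "p < q")
    case False
    then have "T = {}" using sub unfolding ivals_def by auto
    then show ?thesis by simp
  next
    case pq: True
    show ?thesis
    proof (cases "\<exists>w. p \<le> w \<and> w < q \<and> (\<forall>(a, b)\<in>T. \<not> (a \<le> w \<and> w < b))")
      case True
      then obtain w where w: "p \<le> w" "w < q" "\<forall>(a, b)\<in>T. \<not> (a \<le> w \<and> w < b)" by blast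
      have "card T \<le> card (T \<inter> ivals p w) + card (T \<inter> ivals (Suc w) q)"
        using split_vertex[OF sub w(3)] finT card_split_le by metis
      also have "card (T \<inter> ivals p w) \<le> w - p"
        using less.hyps[of w p "T \<inter> ivals p w"] lord_mono[OF lo] w pq by auto
      also have "card (T \<inter> ivals (Suc w) q) \<le> q - Suc w"
        using less.hyps[of q "Suc w" "T \<inter> ivals (Suc w) q"] lord_mono[OF lo] w pq by auto
      finally show ?thesis using w by linarith
    next
      case False
      then have cov: "\<forall>v. p \<le> v \<and> v < q \<longrightarrow> (\<exists>(a, b)\<in>T. a \<le> v \<and> v < b)" by blast
      obtain a b where ab: "(a, b) \<in> T" "a \<le> p" "p < b" using cov pq by blast
      have "a = p" using ab sub unfolding ivals_def by auto
      define D where "D = {d. (p, d) \<in> T}"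
      have Dfin: "finite D"
      proof -
        have "D \<subseteq> snd ` T" unfolding D_def by force
        then show ?thesis using finT finite_subset by blast
      qed
      have bD: "b \<in> D" using ab \<open>a = p\<close> unfolding D_def by simp
      define k where "k = Max D"
      have kT: "(p, k) \<in> T" using Max_in[OF Dfin] bD unfolding k_def D_def by auto
      have kmax: "\<And>e. (p, e) \<in> T \<Longrightarrow> e \<le> k" using Max_ge[OF Dfin] unfolding k_def D_def by auto
      have pk: "p < k" "k \<le> q" using kT sub unfolding ivals_def by auto
      show ?thesis
      proof (cases "k < q")
        case True
        have nj: "\<forall>(a, b)\<in>T. \<not> (a < k \<and> k < b)"
        proof (intro ballI, clarify)
          fix a b assume ab: "(a, b) \<in> T" "a < k" "k < b"
          have "p \<le> a" using ab sub unfolding ivals_def by auto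
          then consider "a = p" | "p < a" by linarith
          then show False
          proof cases
            case 1 then show False using kmax[of b] ab by simp
          next
            case 2 then show False using noncross[OF lo kT ab(1)] ab by simp
          qed
        qed
        have "card T \<le> card (T \<inter> ivals p k) + card (T \<inter> ivals k q)"
          using split_point[OF sub nj] finT card_split_le by metis
        also have "card (T \<inter> ivals p k) \<le> k - p"
          using less.hyps[of k p "T \<inter> ivals p k"] lord_mono[OF lo] pk True by auto
        also have "card (T \<inter> ivals k q) \<le> q - k"
          using less.hyps[of q k "T \<inter> ivals k q"] lord_mono[OF lo] pk True by auto
        finally show ?thesis using pk by linarith
      next
        case False
        then have kq: "k = q" using pk by simp
        define T' where "T' = T - {(p, q)}"
        have sub': "T' \<subseteq> ivals p q" using sub unfolding T'_def by blast
        have lo': "lord T' f" using lord_mono[OF lo] unfolding T'_def by blast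
        have "\<exists>w. p \<le> w \<and> w < q \<and> (\<forall>(a, b)\<in>T'. \<not> (a \<le> w \<and> w < b))"
        proof (rule ccontr)
          assume "\<not> ?thesis"
          then have "\<forall>v. p \<le> v \<and> v < q \<longrightarrow> (\<exists>(a, b)\<in>T - {(p, q)}. a \<le> v \<and> v < b)"
            unfolding T'_def by blast
          then show False using no_chain_under[OF lo sub] kT kq by simp
        qed
        then obtain w where w: "p \<le> w" "w < q" "\<forall>(a, b)\<in>T'. \<not> (a \<le> w \<and> w < b)" by blast
        have finT': "finite T'" using finT unfolding T'_def by simp
        have "card T' \<le> card (T' \<inter> ivals p w) + card (T' \<inter> ivals (Suc w) q)"
          using split_vertex[OF sub' w(3)] finT' card_split_le by metis
        also have "card (T' \<inter> ivals p w) \<le> w - p"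
          using less.hyps[of w p "T' \<inter> ivals p w"] lord_mono[OF lo'] w pq by auto
        also have "card (T' \<inter> ivals (Suc w) q) \<le> q - Suc w"
          using less.hyps[of q "Suc w" "T' \<inter> ivals (Suc w) q"] lord_mono[OF lo'] w pq by auto
        finally have "card T' \<le> q - p - 1" using w by linarith
        moreover have "card T = Suc (card T')" using kT kq finT unfolding T'_def
          by (metis card_Suc_Diff1)
        ultimately show ?thesis using pq by linarith
      qed
    qed
  qed
qed

lemma complete_covers:
  assumes "lord T f" "T \<subseteq> ivals p q" "card T = q - p" "p \<le> w" "w < q"
  shows "\<exists>(a, b)\<in>T. a \<le> w \<and> w < b"
proof (rule ccontr)
  assume "\<not> ?thesis"
  then have nc: "\<forall>(a, b)\<in>T. \<not> (a \<le> w \<and> w < b)" by blast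
  have finT: "finite T" using finite_subset[OF assms(2)] by simp
  have "card T \<le> card (T \<inter> ivals p w) + card (T \<inter> ivals (Suc w) q)"
    using split_vertex[OF assms(2) nc] finT card_split_le by metis
  also have "card (T \<inter> ivals p w) \<le> w - p" using bound[of "T \<inter> ivals p w" f p w] lord_mono[OF assms(1)] by auto
  also have "card (T \<inter> ivals (Suc w) q) \<le> q - Suc w" using bound[of "T \<inter> ivals (Suc w) q" f "Suc w" q] lord_mono[OF assms(1)] by auto
  finally show False using assms(3-5) by linarith
qed

lemma Cs_finite[simp]: "finite (Cs p q)"
proof -
  have "Cs p q \<subseteq> Pow (ivals p q)" unfolding Cs_def by auto
  then show ?thesis by (rule finite_subset) simp
qed

lemma C1s_finite[simp]: "finite (C1s p q)"
  unfolding C1s_def by simp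

lemma Cs_empty: "Cs p p = {{}}"
proof -
  have "ivals p p = {}" unfolding ivals_def by auto
  moreover have "lord {} (\<lambda>_. 0)" unfolding lord_def by simp
  ultimately show ?thesis unfolding Cs_def by auto
qed

lemma CsD:
  assumes "T \<in> Cs p q"
  shows "T \<subseteq> ivals p q" "card T = q - p" "\<exists>f. lord T f" "finite T"
  using assms finite_subset[of T "ivals p q"] unfolding Cs_def by auto

lemma iv_disj: "ivals p k \<inter> ivals k q = {}"
  unfolding ivals_def by auto

lemma iv_disj2: "ivals p v \<inter> ivals (Suc v) k = {}"
  unfolding ivals_def by auto

lemma decomp1:
  assumes T: "T \<in> Cs p q" and pq: "p < q"
  shows "\<exists>k. p < k \<and> k \<le> q \<and> T \<inter> ivals p k \<in> C1s p k \<and> T \<inter> ivals k q \<in> Cs k q \<and>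
           T = (T \<inter> ivals p k) \<union> (T \<inter> ivals k q)"
proof -
  note sub = CsD(1)[OF T] and cT = CsD(2)[OF T] and finT = CsD(4)[OF T]
  obtain f where lo: "lord T f" using CsD(3)[OF T] by blast
  obtain a b where ab: "(a, b) \<in> T" "a \<le> p" "p < b" using complete_covers[OF lo sub cT, of p] pq by auto
  have "a = p" using ab sub unfolding ivals_def by auto
  define D where "D = {d. (p, d) \<in> T}"
  have Dfin: "finite D"
  proof -
    have "D \<subseteq> snd ` T" unfolding D_def by force
    then show ?thesis using finite_subset finite_imageI[OF finT] by blast
  qed
  have bD: "b \<in> D" using ab \<open>a = p\<close> unfolding D_def by simp
  define k where "k = Max D"
  have kT: "(p, k) \<in> T" using Max_in[OF Dfin] bD unfolding k_def D_def by auto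
  have kmax: "\<And>e. (p, e) \<in> T \<Longrightarrow> e \<le> k" using Max_ge[OF Dfin] unfolding k_def D_def by auto
  have pk: "p < k" "k \<le> q" using kT sub unfolding ivals_def by auto
  have nj: "\<forall>(a, b)\<in>T. \<not> (a < k \<and> k < b)"
  proof (intro ballI, clarify)
    fix a b assume ab: "(a, b) \<in> T" "a < k" "k < b"
    have "p \<le> a" using ab sub unfolding ivals_def by auto
    then consider "a = p" | "p < a" by linarith
    then show False
    proof cases
      case 1 then show False using kmax[of b] ab by simp
    next
      case 2 then show False using noncross[OF lo kT ab(1)] ab by simp
    qed
  qed
  define T1 where "T1 = T \<inter> ivals p k"
  define T2 where "T2 = T \<inter> ivals k q"
  have TU: "T = T1 \<union> T2" using split_point[OF sub nj] unfolding T1_def T2_def .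
  have dis: "T1 \<inter> T2 = {}" using iv_disj unfolding T1_def T2_def by blast
  have f1: "finite T1" "finite T2" using finT unfolding T1_def T2_def by auto
  have c: "card T = card T1 + card T2" using TU dis f1 card_Un_disjoint by metis
  have b1: "card T1 \<le> k - p" using bound[of T1 f p k] lord_mono[OF lo] unfolding T1_def by auto
  have b2: "card T2 \<le> q - k" using bound[of T2 f k q] lord_mono[OF lo] unfolding T2_def by auto
  have e1: "card T1 = k - p" and e2: "card T2 = q - k" using c cT b1 b2 pk by linarith+
  have lo1: "lord T1 f" by (rule lord_mono[OF lo]) (simp add: T1_def)
  have lo2: "lord T2 f" by (rule lord_mono[OF lo]) (simp add: T2_def)
  have kT1: "(p, k) \<in> T1" using kT pk unfolding T1_def ivals_def by simp
  have "T1 \<in> C1s p k" unfolding C1s_def Cs_def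
    using e1 lo1 kT1 by (auto simp: T1_def)
  moreover have "T2 \<in> Cs k q" unfolding Cs_def
    using e2 lo2 by (auto simp: T2_def)
  ultimately show ?thesis using pk TU unfolding T1_def T2_def by blast
qed

lemma comp1:
  assumes T1: "T1 \<in> C1s p k" and T2: "T2 \<in> Cs k q" and kq: "k \<le> q"
  shows "T1 \<union> T2 \<in> Cs p q" "(T1 \<union> T2) \<inter> ivals p k = T1" "(T1 \<union> T2) \<inter> ivals k q = T2"
proof -
  have T1C: "T1 \<in> Cs p k" and pkT: "(p, k) \<in> T1" using T1 unfolding C1s_def by auto
  note s1 = CsD(1)[OF T1C] and c1 = CsD(2)[OF T1C] and fin1 = CsD(4)[OF T1C]
  note s2 = CsD(1)[OF T2] and c2 = CsD(2)[OF T2] and fin2 = CsD(4)[OF T2]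
  have pk: "p < k" using pkT s1 unfolding ivals_def by auto
  obtain f1 where l1: "lord T1 f1" using CsD(3)[OF T1C] by blast
  obtain f2 where l2: "lord T2 f2" using CsD(3)[OF T2] by blast
  have d1: "T2 \<inter> ivals p k = {}" using s2 iv_disj by blast
  have d2: "T1 \<inter> ivals k q = {}" using s1 iv_disj by blast
  have dis: "T1 \<inter> T2 = {}" using s1 d1 by blast
  show "(T1 \<union> T2) \<inter> ivals p k = T1" using s1 d1 by blast
  show "(T1 \<union> T2) \<inter> ivals k q = T2" using s2 d2 by blast
  define M where "M = Suc (sum f1 T1)"
  define f where "f X = (if X \<in> T1 then f1 X else M + f2 X)" for X
  have fM: "X \<in> T1 \<Longrightarrow> f1 X < M" for X
    using member_le_sum[of X T1 f1] fin1 unfolding M_def by simp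
  have nb: "\<not> (lhom Y X \<or> lext Y X)" if "X \<in> T1" "Y \<in> T2" for X Y
  proof -
    obtain a b where X: "X = (a, b)" by fastforce
    obtain c d where Y: "Y = (c, d)" by fastforce
    have "b \<le> k" "a < b" using that(1) s1 X unfolding ivals_def by auto
    moreover have "k \<le> c" "c < d" using that(2) s2 Y unfolding ivals_def by auto
    ultimately show ?thesis unfolding X Y lhom_def lext_def by auto
  qed
  have lo: "lord (T1 \<union> T2) f"
    unfolding lord_def
  proof (intro ballI impI)
    fix X Y assume X: "X \<in> T1 \<union> T2" and Y: "Y \<in> T1 \<union> T2" and ne: "X \<noteq> Y" and pr: "lhom X Y \<or> lext X Y"
    show "f X < f Y"
    proof (cases "X \<in> T1")
      case True
      show ?thesis
      proof (cases "Y \<in> T1")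
        case True2: True
        then show ?thesis using lordD[OF l1 True True2 ne pr] True unfolding f_def by simp
      next
        case False
        then show ?thesis using fM[OF True] True unfolding f_def by simp
      qed
    next
      case False
      then have X2: "X \<in> T2" using X by simp
      show ?thesis
      proof (cases "Y \<in> T1")
        case True
        then show ?thesis using nb[OF True X2] pr by simp
      next
        case False2: False
        then have "Y \<in> T2" using Y by simp
        then show ?thesis using lordD[OF l2 X2 _ ne pr] False False2 unfolding f_def by simp
      qed
    qed
  qed
  have "card (T1 \<union> T2) = card T1 + card T2" using dis fin1 fin2 card_Un_disjoint by metis
  then have "card (T1 \<union> T2) = q - p" using c1 c2 pk kq by simp
  moreover have "T1 \<union> T2 \<subseteq> ivals p q" using s1 s2 pk kq unfolding ivals_def by auto
  ultimately show "T1 \<union> T2 \<in> Cs p q" unfolding Cs_def using lo by blast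
qed

lemma Cs_card_rec:
  assumes pq: "p < q"
  shows "card (Cs p q) = (\<Sum>k\<in>{p<..q}. card (C1s p k) * card (Cs k q))"
proof -
  define F where "F k = (\<lambda>(A, B). A \<union> B) ` (C1s p k \<times> Cs k q)" for k
  have eq: "Cs p q = (\<Union>k\<in>{p<..q}. F k)"
  proof (intro equalityI subsetI)
    fix T assume "T \<in> Cs p q"
    then obtain k where k: "p < k" "k \<le> q" "T \<inter> ivals p k \<in> C1s p k" "T \<inter> ivals k q \<in> Cs k q"
      "T = (T \<inter> ivals p k) \<union> (T \<inter> ivals k q)" using decomp1 pq by blast
    then have "T \<in> F k" unfolding F_def by (intro image_eqI[of _ _ "(T \<inter> ivals p k, T \<inter> ivals k q)"]) auto
    then show "T \<in> (\<Union>k\<in>{p<..q}. F k)" using k by auto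
  next
    fix T assume "T \<in> (\<Union>k\<in>{p<..q}. F k)"
    then obtain k A B where "k \<in> {p<..q}" "A \<in> C1s p k" "B \<in> Cs k q" "T = A \<union> B" unfolding F_def by auto
    then show "T \<in> Cs p q" using comp1(1) by auto
  qed
  have inj: "inj_on (\<lambda>(A, B). A \<union> B) (C1s p k \<times> Cs k q)" if "k \<le> q" for k
  proof (rule inj_onI, clarify)
    fix A B A' B' assume "A \<in> C1s p k" "B \<in> Cs k q" "A' \<in> C1s p k" "B' \<in> Cs k q" "A \<union> B = A' \<union> B'"
    then show "A = A' \<and> B = B'" using comp1(2,3)[OF _ _ that] by metis
  qed
  have cardF: "card (F k) = card (C1s p k) * card (Cs k q)" if "k \<in> {p<..q}" for k
    unfolding F_def using card_image[OF inj] that card_cartesian_product by auto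
  have disj: "F i \<inter> F j = {}" if "i \<in> {p<..q}" "j \<in> {p<..q}" "i \<noteq> j" for i j
  proof (rule ccontr)
    assume "F i \<inter> F j \<noteq> {}"
    then obtain A B A' B' where AB: "A \<in> C1s p i" "B \<in> Cs i q" "A' \<in> C1s p j" "B' \<in> Cs j q" "A \<union> B = A' \<union> B'"
      unfolding F_def by auto
    have "\<exists>k k'. k < k' \<and> k \<in> {p<..q} \<and> k' \<in> {p<..q} \<and> (\<exists>A B A' B'. A \<in> C1s p k \<and> B \<in> Cs k q \<and> A' \<in> C1s p k' \<and> B' \<in> Cs k' q \<and> A \<union> B = A' \<union> B')"
    proof (cases "i < j")
      case True then show ?thesis using AB that by blast
    next
      case False then have "j < i" using that by simp
      then show ?thesis using AB that by (intro exI[of _ j] exI[of _ i]) (metis)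
    qed
    then obtain k k' A B A' B' where kk: "k < k'" "k \<in> {p<..q}" "k' \<in> {p<..q}" "A \<in> C1s p k" "B \<in> Cs k q" "A' \<in> C1s p k'" "B' \<in> Cs k' q" "A \<union> B = A' \<union> B'"
      by blast
    have "(p, k') \<in> A'" using kk(6) unfolding C1s_def by simp
    then have "(p, k') \<in> A \<union> B" using kk(8) by simp
    moreover have "(p, k') \<notin> A" using CsD(1)[of A p k] kk(4) kk(1) unfolding C1s_def ivals_def by auto
    moreover have "(p, k') \<notin> B" using CsD(1)[OF kk(5)] kk(2) unfolding ivals_def by auto
    ultimately show False by simp
  qed
  have "card (Cs p q) = (\<Sum>k\<in>{p<..q}. card (F k))"
    unfolding eq
  proof (rule card_UN_disjoint)
    show "finite {p<..q}" by simp
    show "\<forall>i\<in>{p<..q}. finite (F i)" unfolding F_def by simp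
    show "\<forall>i\<in>{p<..q}. \<forall>j\<in>{p<..q}. i \<noteq> j \<longrightarrow> F i \<inter> F j = {}" using disj by blast
  qed
  also have "\<dots> = (\<Sum>k\<in>{p<..q}. card (C1s p k) * card (Cs k q))"
    by (rule sum.cong) (auto simp: cardF)
  finally show ?thesis .
qed

lemma decomp2:
  assumes T: "T \<in> C1s p k"
  shows "\<exists>v. p \<le> v \<and> v < k \<and> (T - {(p, k)}) \<inter> ivals p v \<in> Cs p v \<and>
           (T - {(p, k)}) \<inter> ivals (Suc v) k \<in> Cs (Suc v) k \<and>
           T = insert (p, k) (((T - {(p, k)}) \<inter> ivals p v) \<union> ((T - {(p, k)}) \<inter> ivals (Suc v) k))"
proof -
  have TC: "T \<in> Cs p k" and pkT: "(p, k) \<in> T" using T unfolding C1s_def by auto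
  note sub = CsD(1)[OF TC] and cT = CsD(2)[OF TC] and finT = CsD(4)[OF TC]
  obtain f where lo: "lord T f" using CsD(3)[OF TC] by blast
  have pk: "p < k" using pkT sub unfolding ivals_def by auto
  define T' where "T' = T - {(p, k)}"
  have sub': "T' \<subseteq> ivals p k" using sub unfolding T'_def by blast
  have lo': "lord T' f" by (rule lord_mono[OF lo]) (auto simp: T'_def)
  have finT': "finite T'" using finT unfolding T'_def by simp
  have cT': "card T' = k - p - 1" using cT pkT finT unfolding T'_def by simp
  have "\<exists>w. p \<le> w \<and> w < k \<and> (\<forall>(a, b)\<in>T'. \<not> (a \<le> w \<and> w < b))"
  proof (rule ccontr)
    assume "\<not> ?thesis"
    then have "\<forall>v. p \<le> v \<and> v < k \<longrightarrow> (\<exists>(a, b)\<in>T - {(p, k)}. a \<le> v \<and> v < b)"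
      unfolding T'_def by blast
    then show False using no_chain_under[OF lo sub pkT] by simp
  qed
  then obtain v where v: "p \<le> v" "v < k" "\<forall>(a, b)\<in>T'. \<not> (a \<le> v \<and> v < b)" by blast
  define L where "L = T' \<inter> ivals p v"
  define R where "R = T' \<inter> ivals (Suc v) k"
  have TU: "T' = L \<union> R" using split_vertex[OF sub' v(3)] unfolding L_def R_def .
  have dis: "L \<inter> R = {}" using iv_disj2 unfolding L_def R_def by blast
  have fLR: "finite L" "finite R" using finT' unfolding L_def R_def by auto
  have c: "card T' = card L + card R" using TU dis fLR card_Un_disjoint by metis
  have loL: "lord L f" by (rule lord_mono[OF lo']) (simp add: L_def)
  have loR: "lord R f" by (rule lord_mono[OF lo']) (simp add: R_def)
  have b1: "card L \<le> v - p" using bound[OF loL] unfolding L_def by auto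
  have b2: "card R \<le> k - Suc v" using bound[OF loR] unfolding R_def by auto
  have e1: "card L = v - p" and e2: "card R = k - Suc v" using c cT' b1 b2 v by linarith+
  have "L \<in> Cs p v" unfolding Cs_def using e1 loL by (auto simp: L_def)
  moreover have "R \<in> Cs (Suc v) k" unfolding Cs_def using e2 loR by (auto simp: R_def)
  moreover have "T = insert (p, k) (L \<union> R)" using TU pkT unfolding T'_def by blast
  ultimately show ?thesis using v unfolding L_def R_def T'_def by blast
qed

lemma comp2:
  assumes L: "L \<in> Cs p v" and R: "R \<in> Cs (Suc v) k" and pv: "p \<le> v" and vk: "v < k"
  shows "insert (p, k) (L \<union> R) \<in> C1s p k"
    "(insert (p, k) (L \<union> R) - {(p, k)}) \<inter> ivals p v = L"
    "(insert (p, k) (L \<union> R) - {(p, k)}) \<inter> ivals (Suc v) k = R"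
    "insert (p, k) (L \<union> R) - {(p, k)} = L \<union> R"
proof -
  note sL = CsD(1)[OF L] and cL = CsD(2)[OF L] and finL = CsD(4)[OF L]
  note sR = CsD(1)[OF R] and cR = CsD(2)[OF R] and finR = CsD(4)[OF R]
  obtain fL where lL: "lord L fL" using CsD(3)[OF L] by blast
  obtain fR where lR: "lord R fR" using CsD(3)[OF R] by blast
  have nL: "(p, k) \<notin> L" using sL vk unfolding ivals_def by auto
  have nR: "(p, k) \<notin> R" using sR pv unfolding ivals_def by auto
  have d1: "R \<inter> ivals p v = {}" using sR iv_disj2 by blast
  have d2: "L \<inter> ivals (Suc v) k = {}" using sL iv_disj2 by blast
  have dis: "L \<inter> R = {}" using sL d1 by blast
  show e0: "insert (p, k) (L \<union> R) - {(p, k)} = L \<union> R" using nL nR by blast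
  show "(insert (p, k) (L \<union> R) - {(p, k)}) \<inter> ivals p v = L" unfolding e0 using sL d1 by blast
  show "(insert (p, k) (L \<union> R) - {(p, k)}) \<inter> ivals (Suc v) k = R" unfolding e0 using sR d2 by blast
  define M where "M = Suc (sum fR R)"
  define f where "f X = (if X \<in> R then fR X else if X = (p, k) then M else Suc M + fL X)" for X
  have fM: "X \<in> R \<Longrightarrow> fR X < M" for X
    using member_le_sum[of X R fR] finR unfolding M_def by simp
  have nb1: "\<not> (lhom Y X \<or> lext Y X)" if "X \<in> R" "Y \<in> L" for X Y
  proof -
    obtain a b where X: "X = (a, b)" by fastforce
    obtain c d where Y: "Y = (c, d)" by fastforce
    have "Suc v \<le> a" "a < b" "b \<le> k" using that(1) sR X unfolding ivals_def by auto
    moreover have "p \<le> c" "c < d" "d \<le> v" using that(2) sL Y unfolding ivals_def by auto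
    ultimately show ?thesis unfolding X Y lhom_def lext_def by auto
  qed
  have nb2: "\<not> (lhom (p, k) X \<or> lext (p, k) X)" if "X \<in> R" for X
  proof -
    obtain a b where X: "X = (a, b)" by fastforce
    have "Suc v \<le> a" "a < b" "b \<le> k" using that(1) sR X unfolding ivals_def by auto
    then show ?thesis unfolding X lhom_def lext_def using pv by auto
  qed
  have nb3: "\<not> (lhom Y (p, k) \<or> lext Y (p, k))" if "Y \<in> L" for Y
  proof -
    obtain c d where Y: "Y = (c, d)" by fastforce
    have "p \<le> c" "c < d" "d \<le> v" using that sL Y unfolding ivals_def by auto
    then show ?thesis unfolding Y lhom_def lext_def using vk by auto
  qed
  have lo: "lord (insert (p, k) (L \<union> R)) f"
    unfolding lord_def
  proof (intro ballI impI)
    fix X Y assume X: "X \<in> insert (p, k) (L \<union> R)" and Y: "Y \<in> insert (p, k) (L \<union> R)"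
      and ne: "X \<noteq> Y" and pr: "lhom X Y \<or> lext X Y"
    consider "X \<in> R" | "X = (p, k)" | "X \<in> L" "X \<notin> R" "X \<noteq> (p, k)" using X by blast
    then show "f X < f Y"
    proof cases
      case 1
      consider "Y \<in> R" | "Y \<notin> R" by blast
      then show ?thesis
      proof cases
        case 1 then show ?thesis using lordD[OF lR \<open>X \<in> R\<close> 1 ne pr] \<open>X \<in> R\<close> unfolding f_def by simp
      next
        case 2 then show ?thesis using fM[OF \<open>X \<in> R\<close>] \<open>X \<in> R\<close> unfolding f_def by simp
      qed
    next
      case 2
      then have XR: "X \<notin> R" using nR by simp
      consider "Y \<in> R" | "Y \<in> L" "Y \<notin> R" "Y \<noteq> (p, k)" using Y ne 2 by blast
      then show ?thesis
      proof cases
        case 1 then show ?thesis using nb2[OF 1] pr 2 by simp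
      next
        case 3: 2 then show ?thesis using 2 XR unfolding f_def by simp
      qed
    next
      case 3
      consider "Y \<in> R" | "Y = (p, k)" | "Y \<in> L" "Y \<notin> R" "Y \<noteq> (p, k)" using Y by blast
      then show ?thesis
      proof cases
        case 1 then show ?thesis using nb1[OF 1 \<open>X \<in> L\<close>] pr by simp
      next
        case 2 then show ?thesis using nb3[OF \<open>X \<in> L\<close>] pr by simp
      next
        case 4: 3 then show ?thesis using lordD[OF lL \<open>X \<in> L\<close> \<open>Y \<in> L\<close> ne pr] 3 unfolding f_def by simp
      qed
    qed
  qed
  have "card (insert (p, k) (L \<union> R)) = Suc (card L + card R)"
    using nL nR dis finL finR by (simp add: card_Un_disjoint)
  then have "card (insert (p, k) (L \<union> R)) = k - p" using cL cR pv vk by simp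
  moreover have "insert (p, k) (L \<union> R) \<subseteq> ivals p k" using sL sR pv vk unfolding ivals_def by auto
  ultimately show "insert (p, k) (L \<union> R) \<in> C1s p k" unfolding C1s_def Cs_def using lo by blast
qed

lemma C1s_card_rec:
  assumes pk: "p < k"
  shows "card (C1s p k) = (\<Sum>v\<in>{p..<k}. card (Cs p v) * card (Cs (Suc v) k))"
proof -
  define F where "F v = (\<lambda>(A, B). insert (p, k) (A \<union> B)) ` (Cs p v \<times> Cs (Suc v) k)" for v
  have eq: "C1s p k = (\<Union>v\<in>{p..<k}. F v)"
  proof (intro equalityI subsetI)
    fix T assume "T \<in> C1s p k"
    then obtain v where v: "p \<le> v" "v < k" "(T - {(p, k)}) \<inter> ivals p v \<in> Cs p v"
      "(T - {(p, k)}) \<inter> ivals (Suc v) k \<in> Cs (Suc v) k"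
      "T = insert (p, k) (((T - {(p, k)}) \<inter> ivals p v) \<union> ((T - {(p, k)}) \<inter> ivals (Suc v) k))"
      using decomp2 by blast
    then have "T \<in> F v" unfolding F_def
      by (intro image_eqI[of _ _ "((T - {(p, k)}) \<inter> ivals p v, (T - {(p, k)}) \<inter> ivals (Suc v) k)"]) auto
    then show "T \<in> (\<Union>v\<in>{p..<k}. F v)" using v by auto
  next
    fix T assume "T \<in> (\<Union>v\<in>{p..<k}. F v)"
    then obtain v A B where "v \<in> {p..<k}" "A \<in> Cs p v" "B \<in> Cs (Suc v) k" "T = insert (p, k) (A \<union> B)"
      unfolding F_def by auto
    then show "T \<in> C1s p k" using comp2(1) by auto
  qed
  have inj: "inj_on (\<lambda>(A, B). insert (p, k) (A \<union> B)) (Cs p v \<times> Cs (Suc v) k)" if "p \<le> v" "v < k" for v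
  proof (rule inj_onI, clarify)
    fix A B A' B' assume "A \<in> Cs p v" "B \<in> Cs (Suc v) k" "A' \<in> Cs p v" "B' \<in> Cs (Suc v) k"
      "insert (p, k) (A \<union> B) = insert (p, k) (A' \<union> B')"
    then show "A = A' \<and> B = B'" using comp2(2,3)[OF _ _ that] by metis
  qed
  have cardF: "card (F v) = card (Cs p v) * card (Cs (Suc v) k)" if "v \<in> {p..<k}" for v
    unfolding F_def using card_image[OF inj] that card_cartesian_product by auto
  have nocov: "\<forall>(a, b)\<in>A \<union> B. \<not> (a \<le> v \<and> v < b)" if "A \<in> Cs p v" "B \<in> Cs (Suc v) k" for A B v
    using CsD(1)[OF that(1)] CsD(1)[OF that(2)] unfolding ivals_def by auto
  have disj: "F i \<inter> F j = {}" if "i \<in> {p..<k}" "j \<in> {p..<k}" "i < j" for i j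
  proof (rule ccontr)
    assume "F i \<inter> F j \<noteq> {}"
    then obtain A B A' B' where AB: "A \<in> Cs p i" "B \<in> Cs (Suc i) k" "A' \<in> Cs p j" "B' \<in> Cs (Suc j) k"
      "insert (p, k) (A \<union> B) = insert (p, k) (A' \<union> B')"
      unfolding F_def by auto
    have e: "A \<union> B = A' \<union> B'" using comp2(4)[OF AB(1,2)] comp2(4)[OF AB(3,4)] AB(5) that by auto
    obtain f' where lf: "lord A' f'" using CsD(3)[OF AB(3)] by blast
    have "\<exists>(a, b)\<in>A'. a \<le> i \<and> i < b"
      using complete_covers[OF lf CsD(1)[OF AB(3)] CsD(2)[OF AB(3)], of i] that by auto
    then obtain a b where "(a, b) \<in> A'" "a \<le> i" "i < b" by blast
    then show False using nocov[OF AB(1,2)] e by blast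
  qed
  have disj': "\<forall>i\<in>{p..<k}. \<forall>j\<in>{p..<k}. i \<noteq> j \<longrightarrow> F i \<inter> F j = {}"
    using disj by (metis Int_commute linorder_neqE_nat)
  have "card (C1s p k) = (\<Sum>v\<in>{p..<k}. card (F v))"
    unfolding eq
  proof (rule card_UN_disjoint)
    show "finite {p..<k}" by simp
    show "\<forall>i\<in>{p..<k}. finite (F i)" unfolding F_def by simp
    show "\<forall>i\<in>{p..<k}. \<forall>j\<in>{p..<k}. i \<noteq> j \<longrightarrow> F i \<inter> F j = {}" by (rule disj')
  qed
  also have "\<dots> = (\<Sum>v\<in>{p..<k}. card (Cs p v) * card (Cs (Suc v) k))"
    by (rule sum.cong) (auto simp: cardF)
  finally show ?thesis .
qed

fun FC :: "nat \<Rightarrow> nat \<Rightarrow> real" where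
  "FC 0 m = (if m = 0 then 1 else 0)"
| "FC (Suc s) m = real (Suc s) * fact (3 * m + s) / (fact m * fact (2 * m + Suc s))"

declare FC.simps(2)[simp del]

lemma FC_0[simp]: "FC r 0 = 1"
proof (cases r)
  case 0 then show ?thesis by simp
next
  case (Suc s)
  have "fact (Suc s) = real (Suc s) * fact s" by simp
  then show ?thesis using Suc by (simp add: FC.simps(2) del: fact_Suc)
qed

lemma FC_rec: "FC (Suc s) (Suc m) = FC s (Suc m) + FC (s + 3) m"
proof (cases s)
  case 0
  define X :: real where "X = fact (3 * m + 2)"
  define F :: real where "F = fact m"
  define G :: real where "G = fact (2 * m + 3)"
  have X0: "X > 0" and F0: "F > 0" and G0: "G > 0" unfolding X_def F_def G_def by auto
  have l: "FC (Suc s) (Suc m) = real (3 * m + 3) * X / (real (Suc m) * F * G)"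
  proof -
    have a: "3 * Suc m + 0 = Suc (3 * m + 2)" by simp
    have b: "2 * Suc m + Suc 0 = 2 * m + 3" by simp
    show ?thesis unfolding 0 FC.simps a b X_def F_def G_def
      by (simp only: fact_Suc of_nat_mult) (simp add: algebra_simps)
  qed
  have r2: "FC (s + 3) m = 3 * X / (F * G)"
  proof -
    have e: "s + 3 = Suc 2" using 0 by simp
    have a: "3 * m + 2 = 3 * m + 2" by simp
    show ?thesis unfolding e FC.simps X_def F_def G_def
      by (simp add: algebra_simps)
  qed
  have r1: "FC s (Suc m) = 0" using 0 by simp
  have e3: "real (3 * m + 3) = 3 * real (Suc m)" by simp
  have m0: "real (Suc m) \<noteq> 0" by (simp only: of_nat_eq_0_iff nat.distinct simp_thms)
  have gen: "\<And>y::real. y > 0 \<Longrightarrow> 3 * y * X / (y * F * G) = 3 * X / (F * G)"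
    using F0 G0 by (simp add: field_simps)
  have "real (3 * m + 3) * X / (real (Suc m) * F * G) = 3 * X / (F * G)"
    unfolding e3 by (rule gen) (simp only: of_nat_0_less_iff zero_less_Suc)
  then show ?thesis unfolding l r1 r2 by simp
next
  case (Suc t)
  define X :: real where "X = fact (3 * m + t + 3)"
  define F :: real where "F = fact m"
  define G :: real where "G = fact (2 * m + t + 3)"
  have X0: "X > 0" and F0: "F > 0" and G0: "G > 0" unfolding X_def F_def G_def by auto
  have l: "FC (Suc s) (Suc m) = real (t + 2) * (real (3 * m + t + 4) * X) / ((real (Suc m) * F) * (real (2 * m + t + 4) * G))"
  proof -
    have a: "3 * Suc m + Suc t = Suc (3 * m + t + 3)" by simp
    have b: "2 * Suc m + Suc (Suc t) = Suc (2 * m + t + 3)" by simp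
    show ?thesis unfolding Suc FC.simps a b X_def F_def G_def
      by (simp only: fact_Suc of_nat_mult) (simp add: algebra_simps)
  qed
  have r1: "FC s (Suc m) = real (t + 1) * X / ((real (Suc m) * F) * G)"
  proof -
    have a: "3 * Suc m + t = 3 * m + t + 3" by simp
    have b: "2 * Suc m + Suc t = 2 * m + t + 3" by simp
    show ?thesis unfolding Suc FC.simps a b X_def F_def G_def
      by (simp only: fact_Suc of_nat_mult) (simp add: algebra_simps)
  qed
  have r2: "FC (s + 3) m = real (t + 4) * X / (F * (real (2 * m + t + 4) * G))"
  proof -
    have e: "s + 3 = Suc (t + 3)" using Suc by simp
    have a: "3 * m + (t + 3) = 3 * m + t + 3" by simp
    have b: "2 * m + Suc (t + 3) = Suc (2 * m + t + 3)" by simp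
    show ?thesis unfolding e FC.simps a b X_def F_def G_def
      by (simp only: fact_Suc of_nat_mult) (simp add: algebra_simps)
  qed
  have key: "real (t + 2) * real (3 * m + t + 4) = real (t + 1) * real (2 * m + t + 4) + real (t + 4) * real (Suc m)"
    by (simp add: algebra_simps)
  have gen: "\<And>a b p1 p2 p3 c::real. a > 0 \<Longrightarrow> b > 0 \<Longrightarrow> p1 * c = p2 * b + p3 * a \<Longrightarrow>
      p1 * (c * X) / ((a * F) * (b * G)) = p2 * X / ((a * F) * G) + p3 * X / (F * (b * G))"
  proof -
    fix a b p1 p2 p3 c :: real
    assume a: "a > 0" and b: "b > 0" and e: "p1 * c = p2 * b + p3 * a"
    have "p1 * (c * X) / ((a * F) * (b * G)) = (p1 * c) * X / ((a * F) * (b * G))" by simp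
    also have "\<dots> = (p2 * b + p3 * a) * X / ((a * F) * (b * G))" by (simp only: e)
    also have "\<dots> = p2 * X / ((a * F) * G) + p3 * X / (F * (b * G))"
      using a b F0 G0 by (simp add: field_simps)
    finally show "p1 * (c * X) / ((a * F) * (b * G)) = p2 * X / ((a * F) * G) + p3 * X / (F * (b * G))" .
  qed
  show ?thesis unfolding l r1 r2
    by (rule gen[OF _ _ key]) (simp only: of_nat_0_less_iff; simp)+
qed

lemma FC_conv: "(\<Sum>k\<le>m. FC r k * FC s (m - k)) = FC (r + s) m"
proof (induction m arbitrary: r)
  case 0 then show ?case by simp
next
  case (Suc m)
  note IHm = Suc.IH
  show ?case
  proof (induction r)
    case 0
    have "(\<Sum>k\<le>Suc m. FC 0 k * FC s (Suc m - k)) = FC 0 0 * FC s (Suc m - 0) + (\<Sum>k\<le>m. FC 0 (Suc k) * FC s (Suc m - Suc k))"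
      by (rule sum.atMost_Suc_shift)
    then show ?case by simp
  next
    case (Suc r)
    have "(\<Sum>k\<le>Suc m. FC (Suc r) k * FC s (Suc m - k)) = FC (Suc r) 0 * FC s (Suc m - 0) + (\<Sum>k\<le>m. FC (Suc r) (Suc k) * FC s (Suc m - Suc k))"
      by (rule sum.atMost_Suc_shift)
    also have "\<dots> = FC s (Suc m) + (\<Sum>k\<le>m. FC r (Suc k) * FC s (m - k)) + (\<Sum>k\<le>m. FC (r + 3) k * FC s (m - k))"
      by (simp add: FC_rec algebra_simps sum.distrib)
    also have "FC s (Suc m) + (\<Sum>k\<le>m. FC r (Suc k) * FC s (m - k)) = (\<Sum>k\<le>Suc m. FC r k * FC s (Suc m - k))"
      by (subst sum.atMost_Suc_shift) simp
    also have "\<dots> = FC (r + s) (Suc m)" by (rule Suc.IH)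
    also have "(\<Sum>k\<le>m. FC (r + 3) k * FC s (m - k)) = FC (r + 3 + s) m" by (rule IHm)
    finally show ?case using FC_rec[where s="r + s" and m=m] by (simp add: algebra_simps)
  qed
qed

lemma FC1_Suc: "FC 1 (Suc m) = (\<Sum>j\<le>m. (\<Sum>i\<le>j. FC 1 i * FC 1 (j - i)) * FC 1 (m - j))"
proof -
  have "FC 1 (Suc m) = FC 3 m" using FC_rec[where s=0 and m=m] by simp
  also have "\<dots> = (\<Sum>j\<le>m. FC 2 j * FC 1 (m - j))" using FC_conv[where m=m and r=2 and s=1] by simp
  also have "\<dots> = (\<Sum>j\<le>m. (\<Sum>i\<le>j. FC 1 i * FC 1 (j - i)) * FC 1 (m - j))"
    using FC_conv[where r=1 and s=1] by (simp add: numeral_2_eq_2)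
  finally show ?thesis .
qed

lemma Cs_empty': "q \<le> p \<Longrightarrow> Cs p q = {{}}"
proof -
  assume "q \<le> p"
  then have "ivals p q = {}" unfolding ivals_def by auto
  moreover have "lord {} (\<lambda>_. 0)" unfolding lord_def by simp
  ultimately show ?thesis unfolding Cs_def using \<open>q \<le> p\<close> by auto
qed

lemma reidx1: "(\<Sum>k\<in>{p<..p + Suc m}. g k) = (\<Sum>j\<le>m. g (p + Suc j))"
  by (rule sum.reindex_bij_witness[where j = "\<lambda>k. k - Suc p" and i = "\<lambda>j. p + Suc j"]) auto

lemma reidx2: "(\<Sum>v\<in>{p..<p + Suc j}. g v) = (\<Sum>i\<le>j. g (p + i))"
  by (rule sum.reindex_bij_witness[where j = "\<lambda>k. k - p" and i = "\<lambda>j. p + j"]) auto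

theorem card_Cs: "real (card (Cs p q)) = FC 1 (q - p)"
proof (induction "q - p" arbitrary: p q rule: less_induct)
  case less
  show ?case
  proof (cases "p < q")
    case False
    then show ?thesis using Cs_empty'[of q p] by simp
  next
    case True
    then obtain m where m: "q = p + Suc m" by (metis add_Suc_right less_imp_Suc_add)
    have IH: "real (card (Cs a b)) = FC 1 (b - a)" if "b - a < q - p" for a b
      using less.hyps that by blast
    have "real (card (Cs p q)) = (\<Sum>k\<in>{p<..q}. real (card (C1s p k)) * real (card (Cs k q)))"
      using Cs_card_rec[OF True] by simp
    also have "\<dots> = (\<Sum>k\<in>{p<..q}. (\<Sum>v\<in>{p..<k}. real (card (Cs p v)) * real (card (Cs (Suc v) k))) * real (card (Cs k q)))"
      by (rule sum.cong) (auto simp: C1s_card_rec)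
    also have "\<dots> = (\<Sum>j\<le>m. (\<Sum>i\<le>j. real (card (Cs p (p + i))) * real (card (Cs (Suc (p + i)) (p + Suc j)))) * real (card (Cs (p + Suc j) q)))"
      unfolding m reidx1 reidx2 by simp
    also have "\<dots> = (\<Sum>j\<le>m. (\<Sum>i\<le>j. FC 1 i * FC 1 (j - i)) * FC 1 (m - j))"
    proof (rule sum.cong[OF refl])
      fix j assume j: "j \<in> {..m}"
      have a: "real (card (Cs (p + Suc j) q)) = FC 1 (m - j)" using IH[of q "p + Suc j"] m j by simp
      have b: "(\<Sum>i\<le>j. real (card (Cs p (p + i))) * real (card (Cs (Suc (p + i)) (p + Suc j)))) = (\<Sum>i\<le>j. FC 1 i * FC 1 (j - i))"
      proof (rule sum.cong[OF refl])
        fix i assume i: "i \<in> {..j}"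
        have "real (card (Cs p (p + i))) = FC 1 i" using IH[of "p + i" p] m i j by simp
        moreover have "real (card (Cs (Suc (p + i)) (p + Suc j))) = FC 1 (j - i)" using IH[of "p + Suc j" "Suc (p + i)"] m i j by simp
        ultimately show "real (card (Cs p (p + i))) * real (card (Cs (Suc (p + i)) (p + Suc j))) = FC 1 i * FC 1 (j - i)" by simp
      qed
      show "(\<Sum>i\<le>j. real (card (Cs p (p + i))) * real (card (Cs (Suc (p + i)) (p + Suc j)))) * real (card (Cs (p + Suc j) q)) =
            (\<Sum>i\<le>j. FC 1 i * FC 1 (j - i)) * FC 1 (m - j)" using a b by simp
    qed
    also have "\<dots> = FC 1 (Suc m)" by (rule FC1_Suc[symmetric])
    finally show ?thesis using m by simp
  qed
qed

definition covers :: "nat \<Rightarrow> obj \<Rightarrow> nat \<Rightarrow> bool" where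
  "covers n X w \<longleftrightarrow> (\<exists>t < snd X. (fst X + t) mod n = w)"

definition tord :: "nat \<Rightarrow> obj set \<Rightarrow> (obj \<Rightarrow> nat) \<Rightarrow> bool" where
  "tord n S f \<longleftrightarrow> (\<forall>X\<in>S. \<forall>Y\<in>S. X \<noteq> Y \<longrightarrow> (HOMc n X Y \<or> EXTc n X Y) \<longrightarrow> f X < f Y)"

definition cexc :: "nat \<Rightarrow> obj set \<Rightarrow> bool" where
  "cexc n S \<longleftrightarrow> S \<subseteq> arcs n \<and> card S = n - 1 \<and> (\<exists>f. tord n S f)"

definition proj :: "nat \<Rightarrow> nat \<Rightarrow> iv \<Rightarrow> obj" where
  "proj n r Y = ((fst Y + r) mod n, snd Y - fst Y)"

definition rot :: "nat \<Rightarrow> nat \<Rightarrow> obj \<Rightarrow> iv" where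
  "rot n g X = ((fst X + n - Suc g) mod n, (fst X + n - Suc g) mod n + snd X)"

lemma finite_arcs[simp]: "finite (arcs n)"
proof -
  have "arcs n \<subseteq> {..<n} \<times> {..<n}" unfolding arcs_def by auto
  then show ?thesis by (rule finite_subset) simp
qed

lemma HOMc_refl: "X \<in> arcs n \<Longrightarrow> HOMc n X X"
  unfolding HOMc_def arcs_def by (intro exI[of _ "snd X"]) auto

lemma list_from_potential:
  assumes "finite S" "\<forall>X\<in>S. \<forall>Y\<in>S. X \<noteq> Y \<longrightarrow> R X Y \<longrightarrow> (f X :: nat) < f Y"
  shows "\<exists>xs. distinct xs \<and> set xs = S \<and> (\<forall>i j. i < j \<and> j < length xs \<longrightarrow> \<not> R (xs ! j) (xs ! i))"
  using assms
proof (induction "card S" arbitrary: S)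
  case 0
  then have "S = {}" by simp
  then show ?case by (intro exI[of _ "[]"]) simp
next
  case (Suc c)
  then have ne: "S \<noteq> {}" by auto
  define M where "M = Max (f ` S)"
  have "M \<in> f ` S" unfolding M_def using Suc.prems(1) ne by simp
  then obtain Y where Y: "Y \<in> S" "f Y = M" by blast
  have Ymax: "\<And>X. X \<in> S \<Longrightarrow> f X \<le> f Y" using Y(2) Suc.prems(1) unfolding M_def by simp
  have "\<exists>xs. distinct xs \<and> set xs = S - {Y} \<and> (\<forall>i j. i < j \<and> j < length xs \<longrightarrow> \<not> R (xs ! j) (xs ! i))"
    using Suc.hyps(1)[of "S - {Y}"] Suc.hyps(2) Suc.prems Y(1) by auto
  then obtain xs where xs: "distinct xs" "set xs = S - {Y}" "\<forall>i j. i < j \<and> j < length xs \<longrightarrow> \<not> R (xs ! j) (xs ! i)"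
    by blast
  show ?case
  proof (intro exI[of _ "xs @ [Y]"] conjI allI impI)
    show "distinct (xs @ [Y])" using xs by simp
    show "set (xs @ [Y]) = S" using xs Y by auto
  next
    fix i j assume ij: "i < j \<and> j < length (xs @ [Y])"
    show "\<not> R ((xs @ [Y]) ! j) ((xs @ [Y]) ! i)"
    proof (cases "j < length xs")
      case True then show ?thesis using xs(3) ij by (simp add: nth_append)
    next
      case False
      then have j: "j = length xs" using ij by simp
      have il: "i < length xs" using ij j by simp
      have xi1: "(xs @ [Y]) ! i = xs ! i" using il by (simp add: nth_append)
      have xi2: "xs ! i \<in> S - {Y}"
      proof -
        have "xs ! i \<in> set xs" by (rule nth_mem[OF il])
        then show ?thesis using xs(2) by simp
      qed
      have "(xs @ [Y]) ! j = Y" using j by simp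
      moreover have "\<not> R Y (xs ! i)"
      proof
        assume r: "R Y (xs ! i)"
        have xS: "xs ! i \<in> S" and ne: "Y \<noteq> xs ! i" using xi2 by auto
        have "f Y < f (xs ! i)" using Suc.prems(2) Y(1) xS ne r by blast
        then show False using Ymax[OF xS] by simp
      qed
      ultimately show ?thesis using xi1 by simp
    qed
  qed
qed

theorem exc_set_iff_cexc:
  fixes K :: "'k::field itself"
  shows "exc_set K n S \<longleftrightarrow> cexc n S"
proof
  assume "exc_set K n S"
  then obtain xs where xs: "exc_seq K n xs" "length xs = n - 1" "set xs = S" unfolding exc_set_def by blast
  have sa: "set xs \<subseteq> arcs n" and ord: "\<forall>i j. i < j \<and> j < length xs \<longrightarrow> \<not> HOMc n (xs ! j) (xs ! i) \<and> \<not> EXTc n (xs ! j) (xs ! i)"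
    using xs(1) unfolding exc_seq_iff by auto
  have dist: "distinct xs"
    unfolding distinct_conv_nth
  proof (intro allI impI)
    fix i j assume ij: "i < length xs" "j < length xs" "i \<noteq> j"
    show "xs ! i \<noteq> xs ! j"
    proof
      assume e: "xs ! i = xs ! j"
      have "HOMc n (xs ! i) (xs ! i)" using HOMc_refl sa nth_mem[OF ij(1)] by blast
      then show False using ord ij e by (metis linorder_neqE_nat)
    qed
  qed
  define f where "f X = (THE i. i < length xs \<and> xs ! i = X)" for X
  have fX: "f X < length xs \<and> xs ! f X = X" if "X \<in> set xs" for X
  proof -
    have "\<exists>!i. i < length xs \<and> xs ! i = X" using distinct_Ex1[OF dist that] .
    then show ?thesis unfolding f_def by (rule theI')
  qed
  have "tord n S f" unfolding tord_def
  proof (intro ballI impI)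
    fix X Y assume X: "X \<in> S" and Y: "Y \<in> S" and ne: "X \<noteq> Y" and h: "HOMc n X Y \<or> EXTc n X Y"
    have fx: "f X < length xs" "xs ! f X = X" and fy: "f Y < length xs" "xs ! f Y = Y" using fX X Y xs(3) by auto
    show "f X < f Y"
    proof (rule ccontr)
      assume "\<not> f X < f Y"
      moreover have "f X \<noteq> f Y" using fx fy ne by metis
      ultimately have "f Y < f X" by simp
      then show False using ord fx fy h by metis
    qed
  qed
  moreover have "card S = n - 1" using distinct_card[OF dist] xs by simp
  moreover have "S \<subseteq> arcs n" using sa xs by simp
  ultimately show "cexc n S" unfolding cexc_def by blast
next
  assume "cexc n S"
  then obtain f where S: "S \<subseteq> arcs n" "card S = n - 1" "tord n S f" unfolding cexc_def by blast
  have fin: "finite S" using finite_subset[OF S(1)] by simp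
  obtain xs where xs: "distinct xs" "set xs = S" "\<forall>i j. i < j \<and> j < length xs \<longrightarrow> \<not> (HOMc n (xs ! j) (xs ! i) \<or> EXTc n (xs ! j) (xs ! i))"
    using list_from_potential[OF fin, of "\<lambda>X Y. HOMc n X Y \<or> EXTc n X Y" f] S(3) unfolding tord_def by blast
  have "exc_seq K n xs" unfolding exc_seq_iff using xs S by auto
  moreover have "length xs = n - 1" using distinct_card[OF xs(1)] xs S by simp
  ultimately show "exc_set K n S" unfolding exc_set_def using xs by blast
qed

lemma lift_hom:
  assumes "lhom (a, b) (c, d)"
  shows "HOMc n (proj n r (a, b)) (proj n r (c, d))"
proof -
  have h: "c \<le> a" "a < d" "d \<le> b" using assms unfolding lhom_def by auto
  have ar: "(c + r) mod n + (d - c) - (d - a) = (c + r) mod n + (a - c)" using h by simp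
  have e1: "((c + r) mod n + (a - c)) mod n = (c + r + (a - c)) mod n" by (rule mod_add_left_eq)
  have e2: "c + r + (a - c) = a + r" using h by simp
  have e: "((c + r) mod n + (d - c) - (d - a)) mod n = (a + r) mod n mod n"
    using ar e1 e2 by (metis mod_mod_trivial)
  show ?thesis unfolding HOMc_def proj_def fst_conv snd_conv
    apply (rule exI[of _ "d - a"])
    apply (intro conjI)
       apply (use h in linarith)
      apply (use h in linarith)
     apply (use h in linarith)
    apply (rule e)
    done
qed

lemma lift_ext:
  assumes "lext (a, b) (c, d)"
  shows "EXTc n (proj n r (a, b)) (proj n r (c, d))"
proof -
  have h: "a < c" "c \<le> b" "b < d" using assms unfolding lext_def by auto
  have e1: "((a + r) mod n + (c - a)) mod n = (a + r + (c - a)) mod n" by (rule mod_add_left_eq)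
  have e2: "a + r + (c - a) = c + r" using h by simp
  have e: "((a + r) mod n + (c - a)) mod n = (c + r) mod n mod n"
    using e1 e2 by (metis mod_mod_trivial)
  show ?thesis unfolding EXTc_def proj_def fst_conv snd_conv
    apply (rule exI[of _ "c - a"])
    apply (intro conjI)
       apply (use h in linarith)
      apply (use h in linarith)
     apply (use h in linarith)
    apply (rule e)
    done
qed

lemma hom_back:
  assumes X: "(a, b) \<in> ivals 0 (n - 1)" and Y: "(c, d) \<in> ivals 0 (n - 1)"
    and H: "HOMc n (proj n r (a, b)) (proj n r (c, d))"
  shows "lhom (a, b) (c, d)"
proof -
  have ab: "a < b" "b \<le> n - 1" and cd: "c < d" "d \<le> n - 1" using X Y unfolding ivals_def by auto
  obtain m where m: "1 \<le> m" "m \<le> b - a" "m \<le> d - c" "((c + r) mod n + (d - c) - m) mod n = ((a + r) mod n) mod n"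
    using H unfolding HOMc_def proj_def fst_conv snd_conv by blast
  have ar: "(c + r) mod n + (d - c) - m = (c + r) mod n + (d - m - c)" using m by simp
  have e1: "((c + r) mod n + (d - m - c)) mod n = (c + r + (d - m - c)) mod n" by (rule mod_add_left_eq)
  have e2: "c + r + (d - m - c) = (d - m) + r" using m by simp
  have "((d - m) + r) mod n = (a + r) mod n" using m(4) ar e1 e2 by (metis mod_mod_trivial)
  then have "(d - m) mod n = a mod n" by (rule mod_cancel)
  moreover have "d - m < n" "a < n" using ab cd by auto
  ultimately have "d - m = a" by simp
  then show ?thesis unfolding lhom_def using m by auto
qed

lemma ext_back:
  assumes X: "(a, b) \<in> ivals 0 (n - 1)" and Y: "(c, d) \<in> ivals 0 (n - 1)"
    and H: "EXTc n (proj n r (a, b)) (proj n r (c, d))"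
  shows "lext (a, b) (c, d)"
proof -
  have ab: "a < b" "b \<le> n - 1" and cd: "c < d" "d \<le> n - 1" using X Y unfolding ivals_def by auto
  obtain m where m: "1 \<le> m" "m \<le> b - a" "b - a < d - c + m" "((a + r) mod n + m) mod n = ((c + r) mod n) mod n"
    using H unfolding EXTc_def proj_def fst_conv snd_conv by blast
  have e1: "((a + r) mod n + m) mod n = (a + r + m) mod n" by (rule mod_add_left_eq)
  have e2: "a + r + m = (a + m) + r" by simp
  have "((a + m) + r) mod n = (c + r) mod n" using m(4) e1 e2 by (metis mod_mod_trivial)
  then have "(a + m) mod n = c mod n" by (rule mod_cancel)
  moreover have "a + m < n" "c < n" using ab cd m by auto
  ultimately have "a + m = c" by simp
  then show ?thesis unfolding lext_def using m by auto
qed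

lemma proj_rot:
  assumes "X \<in> arcs n" "g < n"
  shows "proj n (Suc g) (rot n g X) = X"
proof -
  obtain i l where X: "X = (i, l)" by (cases X)
  have i: "i < n" using assms X unfolding arcs_def by auto
  have "((i + n - Suc g) mod n + Suc g) mod n = (i + n - Suc g + Suc g) mod n" by (rule mod_add_left_eq)
  also have "\<dots> = (i + n) mod n" using assms by simp
  also have "\<dots> = i" using i by simp
  finally show ?thesis unfolding proj_def rot_def X by simp
qed

lemma rot_proj:
  assumes "(a, b) \<in> ivals 0 (n - 1)" "g < n"
  shows "rot n g (proj n (Suc g) (a, b)) = (a, b)"
proof -
  have ab: "a < b" "b \<le> n - 1" using assms unfolding ivals_def by auto
  have "((a + Suc g) mod n + n - Suc g) mod n = ((a + Suc g) mod n + (n - Suc g)) mod n" using assms by simp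
  also have "\<dots> = (a + Suc g + (n - Suc g)) mod n" by (rule mod_add_left_eq)
  also have "\<dots> = (a + n) mod n" using assms by simp
  also have "\<dots> = a" using ab by simp
  finally show ?thesis unfolding proj_def rot_def using ab by simp
qed

lemma proj_arcs:
  assumes "(a, b) \<in> ivals 0 (n - 1)"
  shows "proj n r (a, b) \<in> arcs n"
  using assms unfolding ivals_def arcs_def proj_def by auto

lemma covers_proj:
  assumes "(a, b) \<in> ivals 0 (n - 1)" "v < n"
  shows "covers n (proj n r (a, b)) ((v + r) mod n) \<longleftrightarrow> a \<le> v \<and> v < b"
proof -
  have ab: "a < b" "b \<le> n - 1" using assms unfolding ivals_def by auto
  have "covers n (proj n r (a, b)) ((v + r) mod n) \<longleftrightarrow> (\<exists>t < b - a. ((a + r) mod n + t) mod n = (v + r) mod n)"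
    unfolding covers_def proj_def by simp
  also have "\<dots> \<longleftrightarrow> (\<exists>t < b - a. a + t = v)"
  proof (intro ex_cong1 conj_cong refl)
    fix t assume t: "t < b - a"
    have e1: "((a + r) mod n + t) mod n = (a + r + t) mod n" by (rule mod_add_left_eq)
    have e2: "a + r + t = (a + t) + r" by simp
    have "((a + r) mod n + t) mod n = ((a + t) + r) mod n" using e1 e2 by metis
    then have "((a + r) mod n + t) mod n = (v + r) mod n \<longleftrightarrow> (a + t) mod n = v mod n"
      using mod_cancel[of "a + t" r n v] by (metis mod_add_left_eq)
    also have "\<dots> \<longleftrightarrow> a + t = v" using t ab assms(2) by simp
    finally show "((a + r) mod n + t) mod n = (v + r) mod n \<longleftrightarrow> a + t = v" .
  qed
  also have "\<dots> \<longleftrightarrow> a \<le> v \<and> v < b" by (auto intro: exI[of _ "v - a"])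
  finally show ?thesis .
qed

lemma rot_ivals:
  assumes X: "X \<in> arcs n" and g: "g < n" and nc: "\<not> covers n X g"
  shows "rot n g X \<in> ivals 0 (n - 1)"
proof -
  obtain i l where Xe: "X = (i, l)" by (cases X)
  have il: "i < n" "1 \<le> l" "l < n" using X Xe unfolding arcs_def by auto
  define a where "a = (i + n - Suc g) mod n"
  have an: "a < n" unfolding a_def using g by simp
  have ai: "(a + Suc g) mod n = i" using proj_rot[OF X g] unfolding proj_def rot_def Xe a_def by simp
  have "a + l \<le> n - 1"
  proof (rule ccontr)
    assume "\<not> a + l \<le> n - 1"
    then have t: "n - 1 - a < l" using an by linarith
    have "(i + (n - 1 - a)) mod n = ((a + Suc g) mod n + (n - 1 - a)) mod n" using ai by simp
    also have "\<dots> = (a + Suc g + (n - 1 - a)) mod n" by (rule mod_add_left_eq)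
    also have "\<dots> = (g + n) mod n" using an by simp
    also have "\<dots> = g" using g by simp
    finally have "covers n X g" unfolding covers_def Xe using t by auto
    then show False using nc by simp
  qed
  moreover have "rot n g X = (a, a + l)" unfolding rot_def Xe a_def by simp
  ultimately show ?thesis unfolding ivals_def using il by auto
qed

lemma proj_avoids:
  assumes "(a, b) \<in> ivals 0 (n - 1)" "g < n"
  shows "\<not> covers n (proj n (Suc g) (a, b)) g"
proof -
  have n1: "n - 1 < n" "1 \<le> n" using assms(2) by auto
  have "((n - 1) + Suc g) mod n = (g + n) mod n" using n1 by simp
  also have "\<dots> = g" using assms(2) by simp
  finally have "g = ((n - 1) + Suc g) mod n" by simp
  moreover have "\<not> (a \<le> n - 1 \<and> n - 1 < b)" using assms(1) unfolding ivals_def by auto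
  ultimately show ?thesis using covers_proj[OF assms(1) n1(1), of "Suc g"] by simp
qed

lemma mod_two_range:
  assumes "n \<le> (x::nat)" "x < n + n"
  shows "x mod n = x - n"
proof -
  have "x mod n = (x - n) mod n" using assms(1) by (rule le_mod_geq)
  also have "\<dots> = x - n" using assms by simp
  finally show ?thesis .
qed

theorem exists_uncovered:
  assumes n2: "2 \<le> n" and S: "cexc n S"
  shows "\<exists>g<n. \<forall>X\<in>S. \<not> covers n X g"
proof (rule ccontr)
  assume "\<not> ?thesis"
  then have cov: "\<forall>g<n. \<exists>X\<in>S. covers n X g" by auto
  obtain f where Sa: "S \<subseteq> arcs n" "card S = n - 1" "tord n S f" using S unfolding cexc_def by blast
  have finS: "finite S" using finite_subset[OF Sa(1)] by simp
  have neS: "S \<noteq> {}" using Sa(2) n2 by auto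
  define L where "L = Max (snd ` S)"
  have "L \<in> snd ` S" unfolding L_def using finS neS by simp
  then obtain X0 where X0: "X0 \<in> S" "snd X0 = L" by auto
  have Lmax: "\<And>X. X \<in> S \<Longrightarrow> snd X \<le> L" unfolding L_def using finS by simp
  obtain i0 where X0e: "X0 = (i0, L)" using X0 by (cases X0) auto
  have arcX: "\<And>X. X \<in> S \<Longrightarrow> fst X < n \<and> 1 \<le> snd X \<and> snd X < n" using Sa(1) unfolding arcs_def by auto
  have i0n: "i0 < n" and L1: "1 \<le> L" and Ln: "L < n" using arcX[OF X0(1)] X0e by auto
  define base where "base (X::obj) = (fst X + n - i0) mod n" for X
  define lift0 where "lift0 (X::obj) = (base X, base X + snd X)" for X
  define lift1 where "lift1 (X::obj) = (base X + n, base X + n + snd X)" for X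
  define A where "A = lift0 ` S \<union> lift1 ` S"
  define f' where "f' Y = f (proj n i0 Y)" for Y
  have basen: "base X < n" for X unfolding base_def using n2 by simp
  have bi: "(base X + i0) mod n = fst X" if "X \<in> S" for X
  proof -
    have "(base X + i0) mod n = (fst X + n - i0 + i0) mod n" unfolding base_def by (rule mod_add_left_eq)
    also have "\<dots> = (fst X + n) mod n" using i0n by simp
    also have "\<dots> = fst X" using arcX[OF that] by simp
    finally show ?thesis .
  qed
  have pl0: "proj n i0 (lift0 X) = X" if "X \<in> S" for X
    unfolding proj_def lift0_def using bi[OF that] by (cases X) simp
  have pl1: "proj n i0 (lift1 X) = X" if "X \<in> S" for X
  proof -
    have e: "base X + n + i0 = (base X + i0) + n" by simp
    have "(base X + n + i0) mod n = (base X + i0) mod n" unfolding e by (rule mod_add_self2)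
    then show ?thesis unfolding proj_def lift1_def using bi[OF that] by (cases X) simp
  qed
  have b0: "base X0 = 0" unfolding base_def X0e using i0n by simp
  have l0: "(0, L) \<in> A" using X0 b0 X0e unfolding A_def lift0_def by force
  have l1: "(n, n + L) \<in> A" using X0 b0 X0e unfolding A_def lift1_def by force
  have Acases: "\<And>Y. Y \<in> A \<Longrightarrow> \<exists>W\<in>S. Y = lift0 W \<or> Y = lift1 W" unfolding A_def by auto
  have wfA: "\<forall>(a, b)\<in>A. a < b"
  proof (intro ballI, clarify)
    fix a b assume "(a, b) \<in> A"
    then obtain W where W: "W \<in> S" "(a, b) = lift0 W \<or> (a, b) = lift1 W" using Acases by blast
    have "1 \<le> snd W" using arcX[OF W(1)] by simp
    then show "a < b" using W(2) unfolding lift0_def lift1_def by auto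
  qed
  have lenA: "\<And>a b. (a, b) \<in> A \<Longrightarrow> b - a \<le> L"
    using Lmax unfolding A_def lift0_def lift1_def by auto
  have finA: "finite A" unfolding A_def using finS by simp
  have projA: "\<And>Y. Y \<in> A \<Longrightarrow> proj n i0 Y \<in> S"
    using pl0 pl1 unfolding A_def by auto
  have same: "\<not> (lhom Y Y' \<or> lext Y Y')" if YA: "Y \<in> A" and YA': "Y' \<in> A" and YY: "Y \<noteq> Y'" and pe: "proj n i0 Y = proj n i0 Y'" for Y Y'
  proof -
    obtain W where W: "W \<in> S" "Y = lift0 W \<or> Y = lift1 W" using Acases[OF YA] by blast
    obtain W' where W': "W' \<in> S" "Y' = lift0 W' \<or> Y' = lift1 W'" using Acases[OF YA'] by blast
    have "W = W'" using pe W W' pl0 pl1 by metis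
    then have "(Y = lift0 W \<and> Y' = lift1 W) \<or> (Y = lift1 W \<and> Y' = lift0 W)" using W W' YY by auto
    moreover have "snd W < n" using arcX[OF W(1)] by simp
    ultimately show ?thesis unfolding lift0_def lift1_def lhom_def lext_def by auto
  qed
  have loA: "lord A f'"
    unfolding lord_def
  proof (intro ballI impI)
    fix Y Y' assume Y: "Y \<in> A" and Y': "Y' \<in> A" and ne: "Y \<noteq> Y'" and pr: "lhom Y Y' \<or> lext Y Y'"
    have ne2: "proj n i0 Y \<noteq> proj n i0 Y'" using same[OF Y Y' ne] pr by blast
    obtain a b where ab: "Y = (a, b)" by fastforce
    obtain c d where cd: "Y' = (c, d)" by fastforce
    have "HOMc n (proj n i0 Y) (proj n i0 Y') \<or> EXTc n (proj n i0 Y) (proj n i0 Y')"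
      using pr lift_hom lift_ext unfolding ab cd by blast
    then show "f' Y < f' Y'" unfolding f'_def using Sa(3) projA[OF Y] projA[OF Y'] ne2 unfolding tord_def by blast
  qed
  have covA: "\<forall>v. L \<le> v \<and> v < n \<longrightarrow> (\<exists>(a, b)\<in>A. a \<le> v \<and> v < b)"
  proof (intro allI impI)
    fix v assume v: "L \<le> v \<and> v < n"
    define g where "g = (v + i0) mod n"
    have "g < n" unfolding g_def using n2 by simp
    then obtain X where X: "X \<in> S" "covers n X g" using cov by blast
    then obtain t where t: "t < snd X" "(fst X + t) mod n = g" unfolding covers_def by blast
    define c where "c = base X"
    have "(c + t + i0) mod n = (fst X + t) mod n"
    proof -
      have "(c + t + i0) mod n = ((c + i0) + t) mod n" by (simp add: add.commute add.left_commute)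
      also have "\<dots> = ((c + i0) mod n + t) mod n" by (rule mod_add_left_eq[symmetric])
      also have "\<dots> = (fst X + t) mod n" using bi[OF X(1)] unfolding c_def by simp
      finally show ?thesis .
    qed
    then have "(c + t + i0) mod n = (v + i0) mod n" using t(2) unfolding g_def by simp
    then have ctv: "(c + t) mod n = v mod n" by (rule mod_cancel)
    have cn: "c < n" unfolding c_def by (rule basen)
    have tL: "t < L" using t(1) Lmax[OF X(1)] by simp
    have "c + t < n"
    proof (rule ccontr)
      assume "\<not> c + t < n"
      then have "(c + t) mod n = c + t - n" using cn tL Ln by (intro mod_two_range) auto
      then have "c + t - n = v" using ctv v by simp
      then show False using cn tL v \<open>\<not> c + t < n\<close> by linarith
    qed
    then have "c + t = v" using ctv v by simp
    moreover have "lift0 X \<in> A" using X(1) unfolding A_def by simp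
    ultimately have m: "(c, c + snd X) \<in> A" "c \<le> v" "v < c + snd X" unfolding lift0_def c_def using t(1) by auto
    show "\<exists>(a, b)\<in>A. a \<le> v \<and> v < b"
      by (rule bexI[of _ "(c, c + snd X)"]) (use m in auto)
  qed
  have njp: "\<forall>(a, b)\<in>A. \<not> (a < L \<and> L < b)"
  proof (intro ballI, clarify)
    fix a b assume ab: "(a, b) \<in> A" "a < L" "L < b"
    obtain W where W: "W \<in> S" "(a, b) = lift0 W \<or> (a, b) = lift1 W" using Acases[OF ab(1)] by blast
    show False
    proof (cases "(a, b) = lift1 W")
      case True then show False using ab Ln unfolding lift1_def by auto
    next
      case False
      then have e: "(a, b) = lift0 W" using W by simp
      show False
      proof (cases "a = 0")
        case True
        then have "snd W = b" using e unfolding lift0_def by auto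
        then show False using Lmax[OF W(1)] ab by simp
      next
        case False
        then show False using noncross[OF loA l0 ab(1)] ab by simp
      qed
    qed
  qed
  have njq: "\<forall>(a, b)\<in>A. \<not> (a < n \<and> n < b)"
  proof (intro ballI, clarify)
    fix a b assume ab: "(a, b) \<in> A" "a < n" "n < b"
    show False
    proof (cases "b < n + L")
      case True then show False using noncross[OF loA ab(1) l1] ab by simp
    next
      case False
      then show False using lenA[OF ab(1)] ab(2) L1 by linarith
    qed
  qed
  obtain d c where dc: "(L, d) \<in> A" "(c, n) \<in> A" "f' (L, d) \<le> f' (c, n)"
    using chain[OF finA loA wfA _ covA njp njq] Ln by blast
  have "L < d" "c < n" using dc wfA by auto
  have "lext (0, L) (L, d)" unfolding lext_def using L1 \<open>L < d\<close> by simp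
  then have 1: "f' (0, L) < f' (L, d)" using lordD[OF loA l0 dc(1)] L1 by simp
  have "lext (c, n) (n, n + L)" unfolding lext_def using L1 \<open>c < n\<close> by simp
  then have 2: "f' (c, n) < f' (n, n + L)" using lordD[OF loA dc(2) l1] \<open>c < n\<close> by simp
  have "f' (n, n + L) = f' (0, L)"
  proof -
    have "(n, n + L) = lift1 X0" "(0, L) = lift0 X0" unfolding lift1_def lift0_def using b0 X0e by auto
    then show ?thesis unfolding f'_def using pl0[OF X0(1)] pl1[OF X0(1)] by simp
  qed
  then show False using 1 2 dc(3) by simp
qed

lemma rot_mod_back:
  assumes "2 \<le> n" "g < n" "g' < n"
  shows "((g' + n - Suc g) mod n + Suc g) mod n = g'"
proof -
  have "(g', 1) \<in> arcs n" using assms unfolding arcs_def by auto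
  from proj_rot[OF this assms(2)] show ?thesis unfolding proj_def rot_def by simp
qed

theorem count_cexc:
  assumes n2: "2 \<le> n"
  shows "card {S. cexc n S} = n * card (Cs 0 (n - 1))"
proof -
  define G where "G g = (\<lambda>T. proj n (Suc g) ` T) ` Cs 0 (n - 1)" for g
  have sub1: "S \<in> (\<Union>g\<in>{..<n}. G g)" if S: "cexc n S" for S
  proof -
    obtain g where g: "g < n" "\<forall>X\<in>S. \<not> covers n X g" using exists_uncovered[OF n2 S] by blast
    obtain f where Sa: "S \<subseteq> arcs n" "card S = n - 1" "tord n S f" using S unfolding cexc_def by blast
    define T where "T = rot n g ` S"
    have pr: "\<And>X. X \<in> S \<Longrightarrow> proj n (Suc g) (rot n g X) = X" using proj_rot Sa(1) g(1) by blast
    have Tsub: "T \<subseteq> ivals 0 (n - 1)" unfolding T_def using rot_ivals Sa(1) g by blast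
    have inj: "inj_on (rot n g) S" by (rule inj_on_inverseI[of _ "proj n (Suc g)"]) (rule pr)
    have cT: "card T = n - 1 - 0" unfolding T_def using card_image[OF inj] Sa(2) by simp
    have SP: "S = proj n (Suc g) ` T" unfolding T_def image_image using pr by simp
    have lo: "lord T (\<lambda>Y. f (proj n (Suc g) Y))"
      unfolding lord_def
    proof (intro ballI impI)
      fix Y Y' assume Y: "Y \<in> T" and Y': "Y' \<in> T" and ne: "Y \<noteq> Y'" and p: "lhom Y Y' \<or> lext Y Y'"
      obtain X where X: "X \<in> S" "Y = rot n g X" using Y unfolding T_def by blast
      obtain X' where X': "X' \<in> S" "Y' = rot n g X'" using Y' unfolding T_def by blast
      have "X \<noteq> X'" using ne X X' by blast
      obtain a b where ab: "Y = (a, b)" by fastforce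
      obtain c d where cd: "Y' = (c, d)" by fastforce
      have "HOMc n (proj n (Suc g) Y) (proj n (Suc g) Y') \<or> EXTc n (proj n (Suc g) Y) (proj n (Suc g) Y')"
        using p lift_hom lift_ext unfolding ab cd by blast
      then have "HOMc n X X' \<or> EXTc n X X'" using pr X X' by simp
      then have "f X < f X'" using Sa(3) X X' \<open>X \<noteq> X'\<close> unfolding tord_def by blast
      then show "f (proj n (Suc g) Y) < f (proj n (Suc g) Y')" using pr X X' by simp
    qed
    have "T \<in> Cs 0 (n - 1)" unfolding Cs_def using Tsub cT lo by blast
    then show ?thesis using SP g(1) unfolding G_def by blast
  qed
  have cexc_of: "cexc n (proj n (Suc g) ` T)" if T: "T \<in> Cs 0 (n - 1)" and g: "g < n" for T g
  proof -
    note Ts = CsD(1)[OF T] and cT = CsD(2)[OF T]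
    obtain f where lo: "lord T f" using CsD(3)[OF T] by blast
    have rp: "\<And>Y. Y \<in> T \<Longrightarrow> rot n g (proj n (Suc g) Y) = Y" using rot_proj Ts g by fastforce
    have inj: "inj_on (proj n (Suc g)) T" by (rule inj_on_inverseI[of _ "rot n g"]) (rule rp)
    have "proj n (Suc g) ` T \<subseteq> arcs n" using proj_arcs Ts by fastforce
    moreover have "card (proj n (Suc g) ` T) = n - 1" using card_image[OF inj] cT by simp
    moreover have "tord n (proj n (Suc g) ` T) (\<lambda>X. f (rot n g X))"
      unfolding tord_def
    proof (intro ballI impI)
      fix X X' assume X: "X \<in> proj n (Suc g) ` T" and X': "X' \<in> proj n (Suc g) ` T" and ne: "X \<noteq> X'"
        and h: "HOMc n X X' \<or> EXTc n X X'"
      obtain Y where Y: "Y \<in> T" "X = proj n (Suc g) Y" using X by blast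
      obtain Y' where Y': "Y' \<in> T" "X' = proj n (Suc g) Y'" using X' by blast
      have "Y \<noteq> Y'" using ne Y Y' by blast
      obtain a b where ab: "Y = (a, b)" by fastforce
      obtain c d where cd: "Y' = (c, d)" by fastforce
      have iab: "(a, b) \<in> ivals 0 (n - 1)" "(c, d) \<in> ivals 0 (n - 1)" using Ts Y Y' ab cd by auto
      have "lhom Y Y' \<or> lext Y Y'" using h hom_back[OF iab] ext_back[OF iab] Y Y' unfolding ab cd by blast
      then have "f Y < f Y'" using lordD[OF lo Y(1) Y'(1) \<open>Y \<noteq> Y'\<close>] by simp
      then show "f (rot n g X) < f (rot n g X')" using rp Y Y' by simp
    qed
    ultimately show ?thesis unfolding cexc_def by blast
  qed
  have eq: "{S. cexc n S} = (\<Union>g\<in>{..<n}. G g)"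
  proof (intro equalityI subsetI)
    fix S assume "S \<in> {S. cexc n S}" then show "S \<in> (\<Union>g\<in>{..<n}. G g)" using sub1 by blast
  next
    fix S assume "S \<in> (\<Union>g\<in>{..<n}. G g)"
    then obtain g T where "g < n" "T \<in> Cs 0 (n - 1)" "S = proj n (Suc g) ` T" unfolding G_def by blast
    then show "S \<in> {S. cexc n S}" using cexc_of by blast
  qed
  have avoid: "\<forall>X\<in>proj n (Suc g) ` T. \<not> covers n X g" if "T \<in> Cs 0 (n - 1)" "g < n" for T g
    using proj_avoids CsD(1)[OF that(1)] that(2) by fastforce
  have rpT: "rot n g ` (proj n (Suc g) ` T) = T" if "T \<in> Cs 0 (n - 1)" "g < n" for T g
  proof -
    have "\<And>Y. Y \<in> T \<Longrightarrow> rot n g (proj n (Suc g) Y) = Y" using rot_proj CsD(1)[OF that(1)] that(2) by fastforce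
    then show ?thesis unfolding image_image by simp
  qed
  have disj: "G g \<inter> G g' = {}" if g: "g < n" "g' < n" "g \<noteq> g'" for g g'
  proof (rule ccontr)
    assume "G g \<inter> G g' \<noteq> {}"
    then obtain T T' where T: "T \<in> Cs 0 (n - 1)" and T': "T' \<in> Cs 0 (n - 1)"
      and e: "proj n (Suc g) ` T = proj n (Suc g') ` T'" unfolding G_def by blast
    define S where "S = proj n (Suc g) ` T"
    have av': "\<forall>X\<in>S. \<not> covers n X g'" using avoid[OF T' g(2)] e unfolding S_def by simp
    define v where "v = (g' + n - Suc g) mod n"
    have vb: "(v + Suc g) mod n = g'" unfolding v_def by (rule rot_mod_back[OF n2 g(1,2)])
    have vn: "v < n" unfolding v_def using g by simp
    have "v \<noteq> n - 1"
    proof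
      assume "v = n - 1"
      then have "(n - 1 + Suc g) mod n = g'" using vb by simp
      moreover have "n - 1 + Suc g = g + n" using n2 by simp
      ultimately show False using g by simp
    qed
    then have vn1: "v < n - 1" using vn by simp
    obtain f where lo: "lord T f" using CsD(3)[OF T] by blast
    have "\<exists>(a, b)\<in>T. a \<le> v \<and> v < b" using complete_covers[OF lo CsD(1)[OF T] CsD(2)[OF T], of v] vn1 by simp
    then obtain a b where ab: "(a, b) \<in> T" "a \<le> v" "v < b" by blast
    have "(a, b) \<in> ivals 0 (n - 1)" using CsD(1)[OF T] ab(1) by blast
    then have "covers n (proj n (Suc g) (a, b)) ((v + Suc g) mod n)" using covers_proj[of a b n v "Suc g"] vn ab by simp
    then have "covers n (proj n (Suc g) (a, b)) g'" using vb by simp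
    moreover have "proj n (Suc g) (a, b) \<in> S" unfolding S_def using ab(1) by blast
    ultimately show False using av' by blast
  qed
  have cardG: "card (G g) = card (Cs 0 (n - 1))" if "g < n" for g
  proof -
    have "inj_on (\<lambda>T. proj n (Suc g) ` T) (Cs 0 (n - 1))"
    proof (rule inj_onI)
      fix T T' assume "T \<in> Cs 0 (n - 1)" "T' \<in> Cs 0 (n - 1)" "proj n (Suc g) ` T = proj n (Suc g) ` T'"
      then show "T = T'" using rpT that by metis
    qed
    then show ?thesis unfolding G_def by (rule card_image)
  qed
  have "card {S. cexc n S} = (\<Sum>g\<in>{..<n}. card (G g))"
    unfolding eq
  proof (rule card_UN_disjoint)
    show "finite {..<n}" by simp
    show "\<forall>i\<in>{..<n}. finite (G i)" unfolding G_def by simp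
    show "\<forall>i\<in>{..<n}. \<forall>j\<in>{..<n}. i \<noteq> j \<longrightarrow> G i \<inter> G j = {}" using disj by blast
  qed
  also have "\<dots> = (\<Sum>g\<in>{..<n}. card (Cs 0 (n - 1)))" by (rule sum.cong) (auto simp: cardG)
  also have "\<dots> = n * card (Cs 0 (n - 1))" by simp
  finally show ?thesis .
qed

theorem corollary3p12:
  fixes n :: nat
  assumes "n \<ge> 2"
  shows "real (card {S. exc_set TYPE('k::field) n S}) =
           real n * fact (3 * n - 3) / (fact (n - 1) * fact (2 * n - 1))"
proof -
  have "{S. exc_set TYPE('k::field) n S} = {S. cexc n S}" using exc_set_iff_cexc by blast
  then have "real (card {S. exc_set TYPE('k::field) n S}) = real n * real (card (Cs 0 (n - 1)))"
    using count_cexc[OF assms] by simp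
  also have "\<dots> = real n * FC 1 (n - 1)" using card_Cs[of 0 "n - 1"] by simp
  also have "FC 1 (n - 1) = fact (3 * n - 3) / (fact (n - 1) * fact (2 * n - 1))"
  proof -
    have a: "3 * (n - 1) + 0 = 3 * n - 3" by simp
    have b: "2 * (n - 1) + Suc 0 = 2 * n - 1" using assms by simp
    show ?thesis using FC.simps(2)[of 0 "n - 1"] unfolding a b by simp
  qed
  finally show ?thesis by simp
qed

end
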